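(* Let $\epsilon>0$, $p\in(0,1)$, $\delta\in(0,1)$, and let $\rho,\sigma$ be quantum states on a finite-dimensional Hilbert space $H_A$. Then \[ n^{\star}_{\mathrm B,\epsilon}(\rho,\sigma,p,\delta)\le\left(\frac{e^\epsilon+1}{e^\epsilon-1}\right)^2\frac{2\log(1/\delta)}{E_1(\rho\|\sigma)^2}, \qquad n^{\star}_{\mathrm B,\epsilon}\!\left(\rho,\sigma,p,\tfrac p4\right)\le\left(\frac{e^\epsilon+1}{e^\epsilon-1}\right)^2\frac{2\log(1/p)+2\log4}{E_1(\rho\|\sigma)^2}. \]
   Context: All Hilbert spaces are finite-dimensional, $\log$ is natural, $a/0=+\infty$ for $a>0$. $E_\gamma(\rho\|\sigma)=\mathrm{Tr}(\rho-\gamma\sigma)_+$; $E_1(\rho\|\sigma)=\frac12\|\rho-\sigma\|_1$. For $p\in(0,1)$, $p_e(\rho,\sigma,p):=p-pE_{(1-p)/p}(\rho\|\sigma)$ and $n^{\star}_{\mathrm B}(\rho,\sigma,p,\delta):=\inf\{n\in\mathbb N:p_e(\rho^{\otimes n},\sigma^{\otimes n},p)\le\delta\}$. A quantum channel $\mathcal A$ from operators on $H_A$ to operators on some finite-dimensional $H_B$ is in $\mathrm{LDP}_\epsilon$ if $E_{e^\epsilon}(\mathcal A(\rho)\|\mathcal A(\sigma))=0$ for all states $\rho,\sigma$ on $H_A$; $n^{\star}_{\mathrm B,\epsilon}(\rho,\sigma,p,\delta):=\inf_{\mathcal A\in\mathrm{LDP}_\epsilon}n^{\star}_{\mathrm B}(\mathcal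 A(\rho),\mathcal A(\sigma),p,\delta)$. *)

theory Defs
  imports "Jordan_Normal_Form.Schur_Decomposition" "HOL-Library.Extended_Real"
begin

text \<open>Operators on a d-dimensional Hilbert space C^d are d x d complex matrices.\<close>

definition mtrace :: "complex mat \<Rightarrow> complex" where
  "mtrace A = (\<Sum>i<dim_row A. A $$ (i, i))"

definition hermitian :: "complex mat \<Rightarrow> bool" where
  "hermitian A \<longleftrightarrow> A \<in> carrier_mat (dim_row A) (dim_row A) \<and> mat_adjoint A = A"

definition psd :: "complex mat \<Rightarrow> bool" where
  "psd A \<longleftrightarrow> hermitian A \<and>
     (\<forall>v \<in> carrier_vec (dim_row A). Re ((A *\<^sub>v v) \<bullet>c v) \<ge> 0)"

definition density :: "nat \<Rightarrow> complex mat \<Rightarrow> bool" where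
  "density d \<rho> \<longleftrightarrow> \<rho> \<in> carrier_mat d d \<and> psd \<rho> \<and> mtrace \<rho> = 1"

definition unitary_mat :: "nat \<Rightarrow> complex mat \<Rightarrow> bool" where
  "unitary_mat n U \<longleftrightarrow> U \<in> carrier_mat n n \<and> mat_adjoint U * U = 1\<^sub>m n"

definition pos_part :: "complex mat \<Rightarrow> complex mat" where
  "pos_part X = (SOME P. \<exists>U D. unitary_mat (dim_row X) U \<and> D \<in> carrier_mat (dim_row X) (dim_row X)
      \<and> diagonal_mat D \<and> (\<forall>i < dim_row X. D $$ (i, i) \<in> \<real>)
      \<and> X = U * D * mat_adjoint U
      \<and> P = U * mat (dim_row X) (dim_row X)
               (\<lambda>(i, j). if i = j then complex_of_real (max 0 (Re (D $$ (i, i)))) else 0)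
             * mat_adjoint U)"

text \<open>Hockey-stick divergence E_gamma(rho||sigma) = Tr (rho - gamma sigma)_+.\<close>
definition hockey :: "real \<Rightarrow> complex mat \<Rightarrow> complex mat \<Rightarrow> real" where
  "hockey \<gamma> \<rho> \<sigma> = Re (mtrace (pos_part (\<rho> - complex_of_real \<gamma> \<cdot>\<^sub>m \<sigma>)))"

text \<open>Kronecker (tensor) product, first factor major, and tensor powers.\<close>
definition kron :: "complex mat \<Rightarrow> complex mat \<Rightarrow> complex mat" where
  "kron A B = mat (dim_row A * dim_row B) (dim_col A * dim_col B)
     (\<lambda>(i, j). A $$ (i div dim_row B, j div dim_col B) * B $$ (i mod dim_row B, j mod dim_col B))"

fun tpow :: "complex mat \<Rightarrow> nat \<Rightarrow> complex mat" where
  "tpow A 0 = 1\<^sub>m 1"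
| "tpow A (Suc n) = kron (tpow A n) A"

definition p_err :: "complex mat \<Rightarrow> complex mat \<Rightarrow> real \<Rightarrow> real" where
  "p_err \<rho> \<sigma> p = p - p * hockey ((1 - p) / p) \<rho> \<sigma>"

text \<open>Sample complexity n*_B (infimum over the naturals, including 0; Inf {} = infinity).\<close>
definition nB :: "complex mat \<Rightarrow> complex mat \<Rightarrow> real \<Rightarrow> real \<Rightarrow> enat" where
  "nB \<rho> \<sigma> p \<delta> = (INF n \<in> {n::nat. p_err (tpow \<rho> n) (tpow \<sigma> n) p \<le> \<delta>}. enat n)"

text \<open>Quantum channels from C^dA to C^dB: linear, trace-preserving, completely positive.
  (id_k \<otimes> Phi) acts blockwise on operators on C^k \<otimes> C^dA.\<close>
definition block :: "nat \<Rightarrow> complex mat \<Rightarrow> nat \<Rightarrow> nat \<Rightarrow> complex mat" where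
  "block dA X a b = mat dA dA (\<lambda>(r, s). X $$ (a * dA + r, b * dA + s))"

definition id_tensor :: "nat \<Rightarrow> nat \<Rightarrow> nat \<Rightarrow> (complex mat \<Rightarrow> complex mat) \<Rightarrow> complex mat \<Rightarrow> complex mat" where
  "id_tensor k dA dB \<Phi> X = mat (k * dB) (k * dB)
     (\<lambda>(i, j). \<Phi> (block dA X (i div dB) (j div dB)) $$ (i mod dB, j mod dB))"

definition quantum_channel :: "nat \<Rightarrow> nat \<Rightarrow> (complex mat \<Rightarrow> complex mat) \<Rightarrow> bool" where
  "quantum_channel dA dB \<Phi> \<longleftrightarrow>
     (\<forall>X \<in> carrier_mat dA dA. \<Phi> X \<in> carrier_mat dB dB)
   \<and> (\<forall>X \<in> carrier_mat dA dA. \<forall>Y \<in> carrier_mat dA dA. \<forall>a b :: complex.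
        \<Phi> (a \<cdot>\<^sub>m X + b \<cdot>\<^sub>m Y) = a \<cdot>\<^sub>m \<Phi> X + b \<cdot>\<^sub>m \<Phi> Y)
   \<and> (\<forall>X \<in> carrier_mat dA dA. mtrace (\<Phi> X) = mtrace X)
   \<and> (\<forall>k. \<forall>X \<in> carrier_mat (k * dA) (k * dA). psd X \<longrightarrow> psd (id_tensor k dA dB \<Phi> X))"

definition LDP :: "nat \<Rightarrow> real \<Rightarrow> nat \<Rightarrow> (complex mat \<Rightarrow> complex mat) \<Rightarrow> bool" where
  "LDP dA \<epsilon> dB \<Phi> \<longleftrightarrow> quantum_channel dA dB \<Phi> \<and>
     (\<forall>\<rho> \<sigma>. density dA \<rho> \<longrightarrow> density dA \<sigma> \<longrightarrow> hockey (exp \<epsilon>) (\<Phi> \<rho>) (\<Phi> \<sigma>) = 0)"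

definition nB_LDP :: "nat \<Rightarrow> real \<Rightarrow> complex mat \<Rightarrow> complex mat \<Rightarrow> real \<Rightarrow> real \<Rightarrow> enat" where
  "nB_LDP dA \<epsilon> \<rho> \<sigma> p \<delta> =
     (INF c \<in> {(dB, \<Phi>). LDP dA \<epsilon> dB \<Phi>}. nB ((snd c) \<rho>) ((snd c) \<sigma>) p \<delta>)"

text \<open>Division a/b with the convention a/0 = +infinity (used only with a > 0).\<close>
definition ediv :: "real \<Rightarrow> real \<Rightarrow> ereal" where
  "ediv a b = (if b = 0 then \<infinity> else ereal (a / b))"

end

theory Submission
  imports Defs
begin

lemma adj_dim[simp]: "dim_row (mat_adjoint A) = dim_col A" "dim_col (mat_adjoint A) = dim_row A"
  by (auto simp: mat_adjoint_def)

lemma adj_index[simp]: "i < dim_col A \<Longrightarrow> j < dim_row A \<Longrightarrow> mat_adjoint A $$ (i,j) = cnj (A $$ (j,i))"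
  by (auto simp: mat_adjoint_def mat_of_rows_def)

lemma adj_carrier[simp]: "A \<in> carrier_mat n m \<Longrightarrow> mat_adjoint A \<in> carrier_mat m n"
  by auto

lemma adj_adj[simp]: "mat_adjoint (mat_adjoint (A::complex mat)) = A"
  by (rule eq_matI, auto)

lemma adj_mult: "A \<in> carrier_mat n m \<Longrightarrow> B \<in> carrier_mat m k \<Longrightarrow>
   mat_adjoint (A * (B::complex mat)) = mat_adjoint B * mat_adjoint A"
  apply (rule eq_matI)
  apply (auto simp: scalar_prod_def mult.commute intro!: sum.cong)
  done

definition unit_norm :: "complex vec \<Rightarrow> complex vec" where
  "unit_norm w = complex_of_real (1 / sqrt (Re (w \<bullet>c w))) \<cdot>\<^sub>v w"

lemma cprod_real_pos: assumes "w \<in> carrier_vec n" "w \<noteq> 0\<^sub>v n"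
  shows "w \<bullet>c w = complex_of_real (Re (w \<bullet>c w))" "Re (w \<bullet>c w) > 0"
proof -
  have "w \<bullet>c w > 0" using assms by simp
  then show "w \<bullet>c w = complex_of_real (Re (w \<bullet>c w))" "Re (w \<bullet>c w) > 0"
    by (auto simp: less_complex_def complex_eq_iff)
qed

lemma unit_norm_carrier[simp]: "w \<in> carrier_vec n \<Longrightarrow> unit_norm w \<in> carrier_vec n"
  by (simp add: unit_norm_def)

lemma unit_norm_sprod: assumes w: "w \<in> carrier_vec n" "w \<noteq> 0\<^sub>v n" and u: "u \<in> carrier_vec n"
  shows "unit_norm w \<bullet>c unit_norm w = 1" "u \<bullet>c w = 0 \<Longrightarrow> u \<bullet>c unit_norm w = 0"
    "u \<bullet>c w = 0 \<Longrightarrow> unit_norm u \<bullet>c w = 0"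
proof -
  define r where "r = Re (w \<bullet>c w)"
  note rp = cprod_real_pos[OF w, folded r_def]
  have "unit_norm w \<bullet>c unit_norm w = complex_of_real (1 / sqrt r) * complex_of_real (1 / sqrt r) * (w \<bullet>c w)"
    unfolding unit_norm_def conjugate_smult_vec r_def using w
    by (subst smult_scalar_prod_distrib[of _ n], auto)
  also have "\<dots> = complex_of_real (1 / sqrt r * (1 / sqrt r) * r)" unfolding rp(1) of_real_mult by simp
  also have "1 / sqrt r * (1 / sqrt r) * r = 1" using rp(2)
    by (simp add: field_simps)
  finally show "unit_norm w \<bullet>c unit_norm w = 1" by simp
  show "u \<bullet>c w = 0 \<Longrightarrow> u \<bullet>c unit_norm w = 0"
    unfolding unit_norm_def conjugate_smult_vec using w u by simp
  show "u \<bullet>c w = 0 \<Longrightarrow> unit_norm u \<bullet>c w = 0"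
    unfolding unit_norm_def using w u by simp
qed

lemma unit_norm_nz: "w \<in> carrier_vec n \<Longrightarrow> w \<noteq> 0\<^sub>v n \<Longrightarrow> unit_norm w \<noteq> 0\<^sub>v n"
  using unit_norm_sprod(1)[of w n w] by auto

lemma adj_one[simp]: "mat_adjoint (1\<^sub>m n :: complex mat) = 1\<^sub>m n"
  by (rule eq_matI, auto)

lemma exists_eigenvalue: assumes A: "(A :: complex mat) \<in> carrier_mat n n" and n: "n \<noteq> 0"
  shows "\<exists>e. eigenvalue A e"
proof -
  from fundamental_theorem_algebra_factorized[of "char_poly A"] obtain as where
    as: "smult (coeff (char_poly A) (degree (char_poly A))) (\<Prod> a \<leftarrow> as. [:- a, 1:]) = char_poly A"
       "length as = degree (char_poly A)" by blast
  from degree_monic_char_poly[OF A] as(2) n obtain e es where es: "as = e # es" by (cases as, auto)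
  have "poly (char_poly A) e = poly (smult (coeff (char_poly A) (degree (char_poly A))) (\<Prod> a \<leftarrow> as. [:- a, 1:])) e"
    by (simp only: as(1))
  also have "\<dots> = 0" unfolding es by (simp add: poly_prod_list)
  finally have "poly (char_poly A) e = 0" .
  thus ?thesis using eigenvalue_root_char_poly[OF A] by blast
qed

lemma unitary_schur:
  fixes A :: "complex mat"
  assumes "A \<in> carrier_mat n n"
  shows "\<exists>U B. similar_mat_wit A B U (mat_adjoint U) \<and> upper_triangular B"
  using assms
proof (induct n arbitrary: A)
  case 0
  then show ?case
    by (intro exI[of _ "1\<^sub>m 0"] exI[of _ A], auto intro!: similar_mat_witI[of _ _ 0] simp: upper_triangular_def)
next
  case (Suc m A)
  let ?n = "Suc m"
  have A: "A \<in> carrier_mat ?n ?n" by fact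
  obtain e where e: "eigenvalue A e" using exists_eigenvalue[OF A] by auto
  define v where "v = find_eigenvector A e"
  from find_eigenvector[OF A e] have ev: "eigenvector A v e" unfolding v_def .
  from this[unfolded eigenvector_def]
  have v[simp]: "v \<in> carrier_vec ?n" and v0: "v \<noteq> 0\<^sub>v ?n" and Av: "A *\<^sub>v v = e \<cdot>\<^sub>v v" using A by auto
  define b where "b = basis_completion v"
  define ws0 where "ws0 = gram_schmidt ?n b"
  interpret cof_vec_space ?n "TYPE(complex)" .
  from basis_completion[OF v v0, folded b_def]
  have span_b: "span (set b) = carrier_vec ?n" and dist_b: "distinct b" 
    and indep: "\<not> lin_dep (set b)" and b: "set b \<subseteq> carrier_vec ?n" and hdb: "hd b = v" 
    and len_b: "length b = ?n" by auto
  from hdb len_b obtain vs where bv: "b = v # vs" by (cases b, auto)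
  from gram_schmidt_result[OF b dist_b indep refl, folded ws0_def]
  have ws0: "set ws0 \<subseteq> carrier_vec ?n" "corthogonal ws0" "length ws0 = ?n" 
    by (auto simp: len_b)
  from gram_schmidt_hd[OF v, of vs, folded bv] have hdws0: "hd ws0 = v" unfolding ws0_def .
  define ws where "ws = map unit_norm ws0"
  define v' where "v' = unit_norm v"
  have ws0nz: "i < ?n \<Longrightarrow> ws0 ! i \<noteq> 0\<^sub>v ?n" for i
    using corthogonalD[OF ws0(2), of i i] ws0 by auto
  have wsc: "set ws \<subseteq> carrier_vec ?n" using ws0 unfolding ws_def by auto
  have wsl: "length ws = ?n" using ws0 unfolding ws_def by auto
  have ws1: "i < ?n \<Longrightarrow> ws ! i \<bullet>c ws ! i = 1" for i
    proof -
    assume i: "i < ?n"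
    have c: "ws0 ! i \<in> carrier_vec ?n" using ws0 i by auto
    show ?thesis unfolding ws_def using unit_norm_sprod(1)[OF c ws0nz[OF i] c] ws0 i by auto
  qed
  have wsorth: "i < ?n \<Longrightarrow> j < ?n \<Longrightarrow> i \<noteq> j \<Longrightarrow> ws ! i \<bullet>c ws ! j = 0" for i j
  proof -
    assume ij: "i < ?n" "j < ?n" "i \<noteq> j"
    have c: "ws0 ! i \<in> carrier_vec ?n" "ws0 ! j \<in> carrier_vec ?n" using ws0 ij by auto
    have "ws0 ! i \<bullet>c ws0 ! j = 0" using corthogonalD[OF ws0(2), of i j] ws0 ij by auto
    hence "ws0 ! i \<bullet>c unit_norm (ws0 ! j) = 0" using unit_norm_sprod(2)[OF c(2) ws0nz c(1)] ij by auto
    hence "unit_norm (ws0 ! i) \<bullet>c unit_norm (ws0 ! j) = 0"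
      using unit_norm_sprod(3)[OF unit_norm_carrier[OF c(2)] unit_norm_nz[OF c(2) ws0nz] c(1)] ij by auto
    thus ?thesis unfolding ws_def using ij ws0 by auto
  qed
  have wsco: "corthogonal ws"
    unfolding corthogonal_def using ws1 wsorth wsl by auto
  have hdws: "hd ws = v'" unfolding ws_def v'_def using hdws0 ws0(3) by (cases ws0, auto)
  have v'c: "v' \<in> carrier_vec ?n" and v'0: "v' \<noteq> 0\<^sub>v ?n" unfolding v'_def using unit_norm_nz[OF v v0] by auto
  have Av': "A *\<^sub>v v' = e \<cdot>\<^sub>v v'" unfolding v'_def unit_norm_def using Av A
    by (auto simp: mult_mat_vec[of _ ?n ?n] smult_smult_assoc mult.commute)
  define W where "W = mat_of_cols ?n ws"
  define W' where "W' = corthogonal_inv W"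
  define A' where "A' = W' * A * W"
  have col0: "col A' 0 = vec ?n (\<lambda> i. if i = 0 then e else 0)"
    using corthogonal_col_ev_0[OF A v'c v'0 Av' _ hdws wsc wsco wsl] unfolding A'_def W'_def W_def by simp
  have W: "W \<in> carrier_mat ?n ?n" using wsc wsl unfolding W_def by auto
  have W'adj: "W' = mat_adjoint W"
  proof (rule eq_matI)
    show "dim_row W' = dim_row (mat_adjoint W)" "dim_col W' = dim_col (mat_adjoint W)"
      using W unfolding W'_def corthogonal_inv_def by auto
    fix i j assume ij: "i < dim_row (mat_adjoint W)" "j < dim_col (mat_adjoint W)"
    hence ij': "i < ?n" "j < ?n" using W by auto
    have ci: "col W i = ws ! i" unfolding W_def using ij' wsc wsl by (intro col_mat_of_cols, auto)
    have wi: "ws ! i \<in> carrier_vec ?n" using wsc wsl ij' by auto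
    show "W' $$ (i, j) = mat_adjoint W $$ (i, j)"
      using wi unfolding W'_def corthogonal_inv_def using ij' W ci ws1[of i] wsc wsl
      by (auto simp: vec_inv_def mat_of_rows_def W_def mat_of_cols_def)
  qed
  have W': "W' \<in> carrier_mat ?n ?n" unfolding W'adj using W by auto
  have orth_W: "corthogonal_mat W" using orthogonal_mat_of_cols wsc wsco wsl unfolding W_def by blast
  from corthogonal_inv_result[OF orth_W] 
  have W'W: "inverts_mat W' W" unfolding W'_def .
  hence WW': "inverts_mat W W'" using mat_mult_left_right_inverse[OF W' W] W' W
    unfolding inverts_mat_def by auto
  have A': "A' \<in> carrier_mat ?n ?n" using W W' A unfolding A'_def by auto
  have A'A_wit: "similar_mat_wit A' A W' W"
    by (rule similar_mat_witI[of _ _ ?n], insert W W' A A' W'W WW', auto simp: A'_def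
    inverts_mat_def)
  from similar_mat_wit_sym[OF A'A_wit] have simAA': "similar_mat_wit A A' W W'" by auto
  obtain A1 A2 A0 A3 where splitA': "split_block A' 1 1 = (A1,A2,A0,A3)"
    by (cases "split_block A' 1 1", auto)
  from A' have "dim_row A' = 1 + m" "dim_col A' = 1 + m" by auto
  from split_block[OF splitA' this] have A2: "A2 \<in> carrier_mat 1 m"
    and A3: "A3 \<in> carrier_mat m m" 
    and A'block: "A' = four_block_mat A1 A2 A0 A3" by auto
  have A1id: "A1 = mat 1 1 (\<lambda> _. e)"
    using splitA'[unfolded split_block_def Let_def] arg_cong[OF col0, of "\<lambda> v. v $ 0"] A'
    by (auto simp: col_def)
  have A1: "A1 \<in> carrier_mat 1 1" unfolding A1id by auto
  {
    fix i
    assume "i < m"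
    with arg_cong[OF col0, of "\<lambda> v. v $ Suc i"] A'
    have "A' $$ (Suc i, 0) = 0" by auto
  } note A'0 = this
  have A0id: "A0 = 0\<^sub>m m 1"
    using splitA'[unfolded split_block_def Let_def] A'0 A' by auto
  have A0: "A0 \<in> carrier_mat m 1" unfolding A0id by auto
  from Suc(1)[OF A3] obtain P' B where simIH: "similar_mat_wit A3 B P' (mat_adjoint P')" and ut: "upper_triangular B" by auto
  define Q' where "Q' = mat_adjoint P'"
  from similar_mat_witD2[OF A3 simIH[folded Q'_def]] 
  have B: "B \<in> carrier_mat m m" and P': "P' \<in> carrier_mat m m" and Q': "Q' \<in> carrier_mat m m" 
    and PQ': "P' * Q' = 1\<^sub>m m" by auto
  let ?P' = "four_block_mat (1\<^sub>m 1) (0\<^sub>m 1 m) (0\<^sub>m m 1) P'"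
  let ?Q' = "four_block_mat (1\<^sub>m 1) (0\<^sub>m 1 m) (0\<^sub>m m 1) Q'"
  define C where "C = four_block_mat A1 (A2 * P') A0 B"
  have A0_eq: "A0 = P' * A0 * 1\<^sub>m 1" unfolding A0id using P' by auto
  have simA'C: "similar_mat_wit A' C ?P' ?Q'" unfolding A'block C_def
    by (rule similar_mat_wit_four_block[OF similar_mat_wit_refl[OF A1] simIH[folded Q'_def] _ A0_eq A1 A3 A0],
    insert PQ' A2 P' Q', auto)
  have ut1: "upper_triangular A1" unfolding A1id by auto
  have utC: "upper_triangular C" unfolding C_def A0id
    by (intro upper_triangular_four_block[OF _ B ut1 ut], auto simp: A1id)
  have Qadj: "?Q' = mat_adjoint ?P'"
    by (rule eq_matI, insert P', auto simp: Q'_def)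
  have "mat_adjoint (W * ?P') = mat_adjoint ?P' * mat_adjoint W"
    by (rule adj_mult[OF W], insert P', auto)
  hence adj: "?Q' * W' = mat_adjoint (W * ?P')" unfolding Qadj W'adj by simp
  from similar_mat_wit_trans[OF simAA' simA'C] utC
  show ?case unfolding adj by blast
qed

lemma hermitian_spectral:
  fixes X :: "complex mat"
  assumes X: "X \<in> carrier_mat n n" and h: "mat_adjoint X = X"
  shows "\<exists>U D. unitary_mat n U \<and> D \<in> carrier_mat n n \<and> diagonal_mat D \<and> (\<forall>i<n. D $$ (i,i) \<in> \<real>)
      \<and> X = U * D * mat_adjoint U"
proof -
  from unitary_schur[OF X] obtain U B where sim: "similar_mat_wit X B U (mat_adjoint U)" and ut: "upper_triangular B" by auto
  note sw = similar_mat_witD2[OF X sim]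
  have UU: "U * mat_adjoint U = 1\<^sub>m n" "mat_adjoint U * U = 1\<^sub>m n"
    and XB: "X = U * B * mat_adjoint U" and B: "B \<in> carrier_mat n n" and U: "U \<in> carrier_mat n n"
    by (rule sw)+
  have BX: "B = mat_adjoint U * X * U"
  proof -
    have "mat_adjoint U * X * U = (mat_adjoint U * U) * B * (mat_adjoint U * U)"
      unfolding XB using U B by (simp add: assoc_mult_mat[of _ n n _ n _ n] mult_carrier_mat[of _ n n])
    also have "\<dots> = B" unfolding UU using B by simp
    finally show ?thesis by simp
  qed
  have hB: "mat_adjoint B = B"
  proof -
    have "mat_adjoint B = mat_adjoint U * mat_adjoint X * mat_adjoint (mat_adjoint U)"
      unfolding BX using U X by (simp add: adj_mult[of _ n n _ n] assoc_mult_mat[of _ n n _ n _ n])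
    thus ?thesis unfolding h adj_adj BX .
  qed
  have diag: "diagonal_mat B"
    unfolding diagonal_mat_def
  proof (intro allI impI)
    fix i j assume ij: "i < dim_row B" "j < dim_col B" "i \<noteq> j"
    show "B $$ (i,j) = 0"
    proof (cases "j < i")
      case True thus ?thesis using ut ij unfolding upper_triangular_def by auto
    next
      case False
      hence "i < j" using ij by auto
      hence "B $$ (j,i) = 0" using ut ij B unfolding upper_triangular_def by auto
      moreover have "B $$ (i,j) = cnj (B $$ (j,i))" using arg_cong[OF hB, of "\<lambda>M. M $$ (i,j)"] ij B by auto
      ultimately show ?thesis by simp
    qed
  qed
  have real: "\<forall>i<n. B $$ (i,i) \<in> \<real>"
  proof (intro allI impI)
    fix i assume i: "i < n"
    have "B $$ (i,i) = cnj (B $$ (i,i))" using arg_cong[OF hB, of "\<lambda>M. M $$ (i,i)"] i B by auto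
    thus "B $$ (i,i) \<in> \<real>" using Reals_cnj_iff by metis
  qed
  show ?thesis using UU U B diag real XB unfolding unitary_mat_def by blast
qed

lemma mult_diag_index:
  fixes U V D :: "complex mat"
  assumes U: "U \<in> carrier_mat n n" and V: "V \<in> carrier_mat n n" and D: "D \<in> carrier_mat n n"
    and dg: "diagonal_mat D" and ij: "i < n" "j < n"
  shows "(U * D * mat_adjoint V) $$ (i,j) = (\<Sum>k<n. U $$ (i,k) * D $$ (k,k) * cnj (V $$ (j,k)))"
proof -
  have UD: "(U * D) $$ (i,k) = U $$ (i,k) * D $$ (k,k)" if k: "k < n" for k
  proof -
    have "(U * D) $$ (i,k) = (\<Sum>r<n. U $$ (i,r) * D $$ (r,k))"
      using U D ij k by (simp add: scalar_prod_def lessThan_atLeast0)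
    also have "\<dots> = (\<Sum>r\<in>{k}. U $$ (i,r) * D $$ (r,k))"
      by (rule sum.mono_neutral_right, insert dg D k, auto simp: diagonal_mat_def)
    finally show ?thesis by simp
  qed
  show ?thesis using U V D ij UD
    by (simp add: scalar_prod_def lessThan_atLeast0)
qed


lemma mtrace_comm: assumes A: "A \<in> carrier_mat n m" and B: "B \<in> carrier_mat m n"
  shows "mtrace (A * B) = mtrace (B * (A :: complex mat))"
proof -
  have "mtrace (A * B) = (\<Sum>i<n. \<Sum>k<m. A $$ (i,k) * B $$ (k,i))"
    unfolding mtrace_def using A B by (simp add: scalar_prod_def lessThan_atLeast0)
  also have "\<dots> = (\<Sum>k<m. \<Sum>i<n. B $$ (k,i) * A $$ (i,k))"
    by (subst sum.swap, simp add: mult.commute)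
  also have "\<dots> = mtrace (B * A)"
    unfolding mtrace_def using A B by (simp add: scalar_prod_def lessThan_atLeast0)
  finally show ?thesis .
qed

definition spec_dec :: "complex mat \<Rightarrow> complex mat \<Rightarrow> complex mat \<Rightarrow> bool" where
 "spec_dec X U D \<longleftrightarrow> unitary_mat (dim_row X) U \<and> D \<in> carrier_mat (dim_row X) (dim_row X)
      \<and> diagonal_mat D \<and> (\<forall>i < dim_row X. D $$ (i, i) \<in> \<real>) \<and> X = U * D * mat_adjoint U"

definition posD :: "nat \<Rightarrow> complex mat \<Rightarrow> complex mat" where
 "posD n D = mat n n (\<lambda>(i, j). if i = j then complex_of_real (max 0 (Re (D $$ (i, i)))) else 0)"

lemma pos_part_eq: "pos_part X = (SOME P. \<exists>U D. spec_dec X U D \<and> P = U * posD (dim_row X) D * mat_adjoint U)"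
  unfolding pos_part_def spec_dec_def posD_def by (simp add: conj_assoc)

lemma zcnj: "z * cnj z = complex_of_real ((cmod z)^2)"
  using complex_norm_square[of z] by simp

lemma sq_cnj: "z * complex_of_real d * cnj z = complex_of_real (d * (cmod z)^2)"
proof -
  have "z * complex_of_real d * cnj z = complex_of_real d * (z * cnj z)" by (simp add: mult.commute mult.left_commute)
  also have "\<dots> = complex_of_real (d * (cmod z)^2)" unfolding zcnj by simp
  finally show ?thesis .
qed

lemma hockey_dec: assumes ex: "\<exists>U D. spec_dec X U D" and X: "X \<in> carrier_mat n n"
  shows "\<exists>U D. spec_dec X U D \<and> Re (mtrace (pos_part X)) = (\<Sum>i<n. max 0 (Re (D $$ (i,i))))"
proof -
  have "\<exists>P. \<exists>U D. spec_dec X U D \<and> P = U * posD (dim_row X) D * mat_adjoint U" using ex by blast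
  from someI_ex[OF this, folded pos_part_eq] obtain U D where sd: "spec_dec X U D"
    and pp: "pos_part X = U * posD (dim_row X) D * mat_adjoint U" by blast
  have dr: "dim_row X = n" using X by auto
  have U: "U \<in> carrier_mat n n" and UU: "mat_adjoint U * U = 1\<^sub>m n" using sd dr unfolding spec_dec_def unitary_mat_def by auto
  have M: "posD n D \<in> carrier_mat n n" unfolding posD_def by auto
  have "mtrace (pos_part X) = mtrace (U * (posD n D * mat_adjoint U))" unfolding pp dr using U M
    by (simp add: assoc_mult_mat[of _ n n _ n _ n])
  also have "\<dots> = mtrace ((posD n D * mat_adjoint U) * U)"
    by (rule mtrace_comm[OF U], insert M U, auto)
  also have "\<dots> = mtrace (posD n D)" using M U UU by (simp add: assoc_mult_mat[of _ n n _ n _ n])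
  also have "\<dots> = (\<Sum>i<n. complex_of_real (max 0 (Re (D $$ (i,i)))))" unfolding mtrace_def posD_def by simp
  finally have "Re (mtrace (pos_part X)) = (\<Sum>i<n. max 0 (Re (D $$ (i,i))))" by simp
  with sd show ?thesis by blast
qed

lemma unitary_colsum: assumes U: "U \<in> carrier_mat n n" and UU: "mat_adjoint U * U = 1\<^sub>m n" and k: "k < n"
  shows "(\<Sum>s<n. (cmod (U $$ (s,k)))^2) = 1"
proof -
  have "1 = (mat_adjoint U * U) $$ (k,k)" using UU k by simp
  also have "\<dots> = (\<Sum>s<n. cnj (U $$ (s,k)) * U $$ (s,k))" using U k by (simp add: scalar_prod_def lessThan_atLeast0)
  also have "\<dots> = (\<Sum>s<n. complex_of_real ((cmod (U $$ (s,k)))^2))"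
    by (rule sum.cong, simp, subst mult.commute, rule zcnj)
  also have "\<dots> = complex_of_real (\<Sum>s<n. (cmod (U $$ (s,k)))^2)" by simp
  finally show ?thesis by (metis of_real_eq_1_iff)
qed

lemma hockey_lower: assumes ex: "\<exists>U D. spec_dec X U D" and X: "X \<in> carrier_mat n n" and T: "T \<subseteq> {..<n}"
  shows "(\<Sum>s\<in>T. Re (X $$ (s,s))) \<le> Re (mtrace (pos_part X))"
proof -
  from hockey_dec[OF ex X] obtain U D where sd: "spec_dec X U D" and
    hv: "Re (mtrace (pos_part X)) = (\<Sum>i<n. max 0 (Re (D $$ (i,i))))" by blast
  have dr: "dim_row X = n" using X by auto
  have U: "U \<in> carrier_mat n n" and UU: "mat_adjoint U * U = 1\<^sub>m n" and D: "D \<in> carrier_mat n n"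
    and dg: "diagonal_mat D" and re: "\<forall>i<n. D $$ (i,i) \<in> \<real>" and XU: "X = U * D * mat_adjoint U"
    using sd dr unfolding spec_dec_def unitary_mat_def by auto
  define d where "d k = Re (D $$ (k,k))" for k
  define w where "w s k = (cmod (U $$ (s,k)))^2" for s k
  have Dk: "k < n \<Longrightarrow> D $$ (k,k) = complex_of_real (d k)" for k using re unfolding d_def
    by (auto simp: Reals_def)
  have Xs: "s < n \<Longrightarrow> Re (X $$ (s,s)) = (\<Sum>k<n. w s k * d k)" for s
  proof -
    assume s: "s < n"
    have "X $$ (s,s) = (\<Sum>k<n. U $$ (s,k) * D $$ (k,k) * cnj (U $$ (s,k)))"
      unfolding XU by (rule mult_diag_index[OF U U D dg s s])
    also have "\<dots> = (\<Sum>k<n. complex_of_real (w s k * d k))"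
      by (rule sum.cong, simp, subst Dk, simp, subst sq_cnj, simp add: w_def mult.commute)
    finally show ?thesis by simp
  qed
  have "(\<Sum>s\<in>T. Re (X $$ (s,s))) = (\<Sum>s\<in>T. \<Sum>k<n. w s k * d k)"
    by (rule sum.cong, insert Xs T, auto)
  also have "\<dots> = (\<Sum>k<n. (\<Sum>s\<in>T. w s k) * d k)"
    by (subst sum.swap, simp add: sum_distrib_right)
  also have "\<dots> \<le> (\<Sum>k<n. max 0 (d k))"
  proof (rule sum_mono)
    fix k assume k: "k \<in> {..<n}"
    have c0: "0 \<le> (\<Sum>s\<in>T. w s k)" unfolding w_def by (simp add: sum_nonneg)
    have "(\<Sum>s\<in>T. w s k) \<le> (\<Sum>s<n. w s k)"
      by (rule sum_mono2, insert T, auto simp: w_def)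
    also have "\<dots> = 1" unfolding w_def using unitary_colsum[OF U UU] k by auto
    finally have c1: "(\<Sum>s\<in>T. w s k) \<le> 1" .
    show "(\<Sum>s\<in>T. w s k) * d k \<le> max 0 (d k)"
    proof (cases "d k \<ge> 0")
      case True thus ?thesis using c1 c0 by (simp add: mult_left_le_one_le)
    next
      case False thus ?thesis using c0 by (simp add: mult_nonneg_nonpos)
    qed
  qed
  finally show ?thesis unfolding hv d_def .
qed

lemma hockey_upper0: assumes ex: "\<exists>U D. spec_dec X U D" and X: "X \<in> carrier_mat n n"
  and dX: "diagonal_mat X" and neg: "\<forall>s<n. Re (X $$ (s,s)) \<le> 0"
  shows "Re (mtrace (pos_part X)) \<le> 0"
proof -
  from hockey_dec[OF ex X] obtain U D where sd: "spec_dec X U D" and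
    hv: "Re (mtrace (pos_part X)) = (\<Sum>i<n. max 0 (Re (D $$ (i,i))))" by blast
  have dr: "dim_row X = n" using X by auto
  have U: "U \<in> carrier_mat n n" and UU: "mat_adjoint U * U = 1\<^sub>m n" and D: "D \<in> carrier_mat n n"
    and XU: "X = U * D * mat_adjoint U"
    using sd dr unfolding spec_dec_def unitary_mat_def by auto
  have DX: "D = mat_adjoint U * X * mat_adjoint (mat_adjoint U)"
  proof -
    have "mat_adjoint U * X * U = (mat_adjoint U * U) * D * (mat_adjoint U * U)"
      unfolding XU using U D by (simp add: assoc_mult_mat[of _ n n _ n _ n] mult_carrier_mat[of _ n n])
    also have "\<dots> = D" unfolding UU using D by simp
    finally show ?thesis by simp
  qed
  have "Re (D $$ (k,k)) \<le> 0" if k: "k < n" for k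
  proof -
    have "D $$ (k,k) = (\<Sum>s<n. mat_adjoint U $$ (k,s) * X $$ (s,s) * cnj (mat_adjoint U $$ (k,s)))"
      unfolding DX by (rule mult_diag_index[OF _ _ X dX k k], insert U, auto)
    also have "\<dots> = (\<Sum>s<n. cnj (U $$ (s,k)) * X $$ (s,s) * U $$ (s,k))"
      by (rule sum.cong, insert U k, auto)
    finally have "Re (D $$ (k,k)) = (\<Sum>s<n. Re (cnj (U $$ (s,k)) * X $$ (s,s) * U $$ (s,k)))" by simp
    also have "\<dots> = (\<Sum>s<n. (cmod (U $$ (s,k)))^2 * Re (X $$ (s,s)))"
    proof (rule sum.cong)
      fix s
      have "cnj (U $$ (s,k)) * X $$ (s,s) * U $$ (s,k) = X $$ (s,s) * (U $$ (s,k) * cnj (U $$ (s,k)))"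
        by (metis mult.commute mult.left_commute)
      also have "\<dots> = X $$ (s,s) * complex_of_real ((cmod (U $$ (s,k)))^2)"
        by (simp only: zcnj)
      finally have eq: "cnj (U $$ (s,k)) * X $$ (s,s) * U $$ (s,k) = X $$ (s,s) * complex_of_real ((cmod (U $$ (s,k)))^2)" .
      show "Re (cnj (U $$ (s,k)) * X $$ (s,s) * U $$ (s,k)) = (cmod (U $$ (s,k)))^2 * Re (X $$ (s,s))"
        unfolding eq by simp
    qed simp
    also have "\<dots> \<le> 0" using neg by (intro sum_nonpos, simp add: mult_nonneg_nonpos)
    finally show ?thesis .
  qed
  hence "(\<Sum>i<n. max 0 (Re (D $$ (i,i)))) = 0" by simp
  thus ?thesis unfolding hv by simp
qed

lemma spec_diag: assumes X: "X \<in> carrier_mat n n" and dX: "diagonal_mat X" and re: "\<forall>i<n. X $$ (i,i) \<in> \<real>"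
  shows "\<exists>U D. spec_dec X U D"
  by (rule exI[of _ "1\<^sub>m n"], rule exI[of _ X], insert X dX re, auto simp: spec_dec_def unitary_mat_def)

lemma sum_split_div: fixes k d :: nat and f :: "nat \<Rightarrow> 'a::comm_monoid_add" shows "(\<Sum>i<k*d. f i) = (\<Sum>a<k. \<Sum>s<d. f (a*d+s))"
proof -
  have "(\<Sum>i<k*d. f i) = (\<Sum>a<k. sum f {a*d..<a*d+d})" using sum.nat_group[of f d k] by simp
  also have "\<dots> = (\<Sum>a<k. \<Sum>s<d. f (a*d+s))"
  proof (rule sum.cong[OF refl])
    fix a
    have "sum f {a*d..<a*d+d} = sum f {0+a*d..<d+a*d}" by (simp add: add.commute)
    also have "\<dots> = (\<Sum>s=0..<d. f (s + a*d))" by (rule sum.shift_bounds_nat_ivl)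
    finally show "sum f {a*d..<a*d+d} = (\<Sum>s<d. f (a*d+s))" by (simp add: atLeast0LessThan add.commute)
  qed
  finally show ?thesis .
qed

definition qf :: "complex mat \<Rightarrow> nat \<Rightarrow> nat \<Rightarrow> complex mat \<Rightarrow> complex" where
 "qf U n r Z = (\<Sum>s<n. \<Sum>t<n. cnj (U $$ (s,r)) * Z $$ (s,t) * U $$ (t,r))"

definition cf :: "nat set \<Rightarrow> real \<Rightarrow> real \<Rightarrow> nat \<Rightarrow> nat \<Rightarrow> real" where
 "cf S a b i r = (if (i = 0) = (r \<in> S) then a else b)"

definition chan :: "nat \<Rightarrow> complex mat \<Rightarrow> nat set \<Rightarrow> real \<Rightarrow> real \<Rightarrow> complex mat \<Rightarrow> complex mat" where
 "chan n U S a b Z = mat 2 2 (\<lambda>(i,j). if i = j then (\<Sum>r<n. complex_of_real (cf S a b i r) * qf U n r Z) else 0)"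

lemma qf_mat: assumes Z: "Z \<in> carrier_mat n n" and U: "U \<in> carrier_mat n n" and r: "r < n"
  shows "qf U n r Z = (mat_adjoint U * Z * U) $$ (r,r)"
proof -
  have "(mat_adjoint U * Z * U) $$ (r,r) = (\<Sum>t<n. (\<Sum>s<n. cnj (U $$ (s,r)) * Z $$ (s,t)) * U $$ (t,r))"
    using Z U r by (simp add: scalar_prod_def lessThan_atLeast0)
  also have "\<dots> = (\<Sum>t<n. \<Sum>s<n. cnj (U $$ (s,r)) * Z $$ (s,t) * U $$ (t,r))"
    by (simp add: sum_distrib_right)
  also have "\<dots> = qf U n r Z" unfolding qf_def by (rule sum.swap)
  finally show ?thesis by simp
qed

lemma qf_quad: assumes Z: "Z \<in> carrier_mat n n" and U: "U \<in> carrier_mat n n" and r: "r < n"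
  shows "qf U n r Z = (Z *\<^sub>v col U r) \<bullet>c col U r"
proof -
  have "(Z *\<^sub>v col U r) \<bullet>c col U r = (\<Sum>s<n. (\<Sum>t<n. Z $$ (s,t) * U $$ (t,r)) * cnj (U $$ (s,r)))"
    using Z U r by (simp add: scalar_prod_def lessThan_atLeast0)
  also have "\<dots> = qf U n r Z" unfolding qf_def
    by (simp add: sum_distrib_right sum_distrib_left mult.commute mult.left_commute)
  finally show ?thesis by simp
qed

lemma qf_lin: assumes X: "X \<in> carrier_mat n n" and Y: "Y \<in> carrier_mat n n"
  shows "qf U n r (x \<cdot>\<^sub>m X + y \<cdot>\<^sub>m Y) = x * qf U n r X + y * qf U n r Y"
proof -
  have "qf U n r (x \<cdot>\<^sub>m X + y \<cdot>\<^sub>m Y) = (\<Sum>s<n. \<Sum>t<n. x * (cnj (U $$ (s,r)) * X $$ (s,t) * U $$ (t,r))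
      + y * (cnj (U $$ (s,r)) * Y $$ (s,t) * U $$ (t,r)))"
    unfolding qf_def by (intro sum.cong refl, insert X Y, auto simp: algebra_simps)
  also have "\<dots> = x * qf U n r X + y * qf U n r Y" by (simp add: qf_def sum.distrib sum_distrib_left)
  finally show ?thesis .
qed

lemma qf_minus: assumes X: "X \<in> carrier_mat n n" and Y: "Y \<in> carrier_mat n n"
  shows "qf U n r (X - Y) = qf U n r X - qf U n r Y"
  unfolding qf_def using X Y
  by (simp add: sum_subtractf[symmetric] algebra_simps)

lemma qf_herm: assumes Z: "Z \<in> carrier_mat n n" and h: "mat_adjoint Z = Z"
  shows "cnj (qf U n r Z) = qf U n r Z"
proof -
  have Zc: "s < n \<Longrightarrow> t < n \<Longrightarrow> cnj (Z $$ (s,t)) = Z $$ (t,s)" for s t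
    using arg_cong[OF h, of "\<lambda>M. M $$ (t,s)"] Z by auto
  have "cnj (qf U n r Z) = (\<Sum>s<n. \<Sum>t<n. U $$ (s,r) * Z $$ (t,s) * cnj (U $$ (t,r)))"
    unfolding qf_def by (simp add: Zc)
  also have "\<dots> = (\<Sum>t<n. \<Sum>s<n. U $$ (s,r) * Z $$ (t,s) * cnj (U $$ (t,r)))" by (rule sum.swap)
  also have "\<dots> = qf U n r Z" unfolding qf_def by (simp add: mult.commute mult.left_commute)
  finally show ?thesis .
qed

lemma cnj_real: "cnj z = z \<Longrightarrow> z = complex_of_real (Re z)"
  by (simp add: complex_eq_iff)

lemma chan_carrier: "chan n U S a b Z \<in> carrier_mat 2 2" unfolding chan_def by auto

lemma chan_index: "i < 2 \<Longrightarrow> j < 2 \<Longrightarrow> chan n U S a b Z $$ (i,j) = (if i = j then (\<Sum>r<n. complex_of_real (cf S a b i r) * qf U n r Z) else 0)"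
  unfolding chan_def by auto

lemma chan_dim[simp]: "dim_row (chan n U S a b Z) = 2" "dim_col (chan n U S a b Z) = 2"
  unfolding chan_def by auto

lemma chan_lin: assumes X: "X \<in> carrier_mat n n" and Y: "Y \<in> carrier_mat n n"
  shows "chan n U S a b (x \<cdot>\<^sub>m X + y \<cdot>\<^sub>m Y) = x \<cdot>\<^sub>m chan n U S a b X + y \<cdot>\<^sub>m chan n U S a b Y"
proof (rule eq_matI)
  fix i j assume ij: "i < dim_row (x \<cdot>\<^sub>m chan n U S a b X + y \<cdot>\<^sub>m chan n U S a b Y)"
    "j < dim_col (x \<cdot>\<^sub>m chan n U S a b X + y \<cdot>\<^sub>m chan n U S a b Y)"
  hence ij': "i < 2" "j < 2" by (simp_all only: index_add_mat index_smult_mat chan_dim)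
  have e: "(x \<cdot>\<^sub>m chan n U S a b X + y \<cdot>\<^sub>m chan n U S a b Y) $$ (i, j) = x * chan n U S a b X $$ (i,j) + y * chan n U S a b Y $$ (i,j)"
    using ij' by simp
  show "chan n U S a b (x \<cdot>\<^sub>m X + y \<cdot>\<^sub>m Y) $$ (i, j) = (x \<cdot>\<^sub>m chan n U S a b X + y \<cdot>\<^sub>m chan n U S a b Y) $$ (i, j)"
  proof (cases "i = j")
    case True
    have "chan n U S a b (x \<cdot>\<^sub>m X + y \<cdot>\<^sub>m Y) $$ (i, j) = (\<Sum>r<n. complex_of_real (cf S a b i r) * (x * qf U n r X + y * qf U n r Y))"
      unfolding chan_index[OF ij'] qf_lin[OF X Y] using True by simp
    also have "\<dots> = x * (\<Sum>r<n. complex_of_real (cf S a b i r) * qf U n r X) + y * (\<Sum>r<n. complex_of_real (cf S a b i r) * qf U n r Y)"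
      by (simp add: sum.distrib sum_distrib_left ring_distribs mult.left_commute)
    finally show ?thesis unfolding e chan_index[OF ij'] using True by simp
  next
    case False
    thus ?thesis unfolding e chan_index[OF ij'] by simp
  qed
qed simp_all

lemma chan_trace: assumes Z: "Z \<in> carrier_mat n n" and U: "U \<in> carrier_mat n n"
  and UU: "mat_adjoint U * U = 1\<^sub>m n" and ab: "a + b = 1"
  shows "mtrace (chan n U S a b Z) = mtrace Z"
proof -
  have UU': "U * mat_adjoint U = 1\<^sub>m n" using mat_mult_left_right_inverse[OF _ U UU] U by auto
  have abc: "complex_of_real a + complex_of_real b = 1" using ab by (metis of_real_add of_real_1)
  have "mtrace (chan n U S a b Z) = (\<Sum>r<n. complex_of_real (cf S a b 0 r) * qf U n r Z)
       + (\<Sum>r<n. complex_of_real (cf S a b 1 r) * qf U n r Z)"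
    unfolding mtrace_def using chan_carrier[of n U S a b Z] by (simp add: chan_index numeral_2_eq_2)
  also have "\<dots> = (\<Sum>r<n. qf U n r Z)"
    unfolding sum.distrib[symmetric]
    by (rule sum.cong, simp, simp add: cf_def distrib_right[symmetric] abc add.commute)
  also have "\<dots> = (\<Sum>r<n. (mat_adjoint U * Z * U) $$ (r,r))" using qf_mat[OF Z U] by simp
  also have "\<dots> = mtrace (mat_adjoint U * Z * U)" unfolding mtrace_def using U Z by simp
  also have "\<dots> = mtrace (Z * U * mat_adjoint U)"
    using mtrace_comm[of "mat_adjoint U" n n "Z * U"] U Z by (simp add: assoc_mult_mat[of _ n n _ n _ n])
  also have "\<dots> = mtrace Z" using U Z UU' by (simp add: assoc_mult_mat[of _ n n _ n _ n])
  finally show ?thesis .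
qed

lemma swap_inner: "(\<Sum>a\<in>A. \<Sum>b\<in>B. \<Sum>c\<in>C. f a b c) = (\<Sum>a\<in>A. \<Sum>c\<in>C. \<Sum>b\<in>B. f a b c)"
  by (rule sum.cong[OF refl], rule sum.swap)

lemma reorder4: "(\<Sum>a\<in>A. \<Sum>m\<in>M. \<Sum>b\<in>B. \<Sum>r\<in>R. f a m b r) = (\<Sum>m\<in>M. \<Sum>r\<in>R. \<Sum>a\<in>A. \<Sum>b\<in>B. f a m b r)"
proof -
  have "(\<Sum>a\<in>A. \<Sum>m\<in>M. \<Sum>b\<in>B. \<Sum>r\<in>R. f a m b r) = (\<Sum>m\<in>M. \<Sum>a\<in>A. \<Sum>b\<in>B. \<Sum>r\<in>R. f a m b r)"
    by (rule sum.swap)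
  also have "\<dots> = (\<Sum>m\<in>M. \<Sum>a\<in>A. \<Sum>r\<in>R. \<Sum>b\<in>B. f a m b r)"
    by (rule sum.cong[OF refl], rule swap_inner)
  also have "\<dots> = (\<Sum>m\<in>M. \<Sum>r\<in>R. \<Sum>a\<in>A. \<Sum>b\<in>B. f a m b r)"
    by (rule sum.cong[OF refl], rule sum.swap)
  finally show ?thesis .
qed

definition QB :: "complex mat \<Rightarrow> nat \<Rightarrow> complex mat \<Rightarrow> nat \<Rightarrow> nat \<Rightarrow> nat \<Rightarrow> complex" where
  "QB U n X r a b = (\<Sum>s<n. \<Sum>t<n. cnj (U $$ (s,r)) * X $$ (a*n+s, b*n+t) * U $$ (t,r))"

lemma qf_block: "qf U n r (block n X a b) = QB U n X r a b"
  unfolding qf_def QB_def block_def by (intro sum.cong refl, auto)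

lemma idt_index: assumes "i < k*2" "j < k*2"
  shows "id_tensor k n 2 (chan n U S a b) X $$ (i,j) =
    (if i mod 2 = j mod 2 then (\<Sum>r<n. complex_of_real (cf S a b (i mod 2) r) * QB U n X r (i div 2) (j div 2)) else 0)"
  using assms unfolding id_tensor_def by (simp add: chan_index qf_block)

lemma idt_dim[simp]: "dim_row (id_tensor k n 2 \<Phi> X) = k*2" "dim_col (id_tensor k n 2 \<Phi> X) = k*2"
  unfolding id_tensor_def by auto

lemma QB_herm: assumes X: "X \<in> carrier_mat (k*n) (k*n)" and h: "mat_adjoint X = X"
  and ab: "a < k" "b < k"
  shows "cnj (QB U n X r b a) = QB U n X r a b"
proof -
  have Xc: "s < n \<Longrightarrow> t < n \<Longrightarrow> cnj (X $$ (b*n+s, a*n+t)) = X $$ (a*n+t, b*n+s)" for s t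
  proof -
    assume st: "s < n" "t < n"
    have lt: "b*n+s < k*n" "a*n+t < k*n"
    proof -
      have "b*n+s < b*n+n" using st by simp
      also have "\<dots> = Suc b * n" by simp
      also have "\<dots> \<le> k*n" using ab by (intro mult_right_mono, auto)
      finally show "b*n+s < k*n" .
      have "a*n+t < a*n+n" using st by simp
      also have "\<dots> = Suc a * n" by simp
      also have "\<dots> \<le> k*n" using ab by (intro mult_right_mono, auto)
      finally show "a*n+t < k*n" .
    qed
    show ?thesis using arg_cong[OF h, of "\<lambda>M. M $$ (a*n+t, b*n+s)"] X lt by auto
  qed
  have "cnj (QB U n X r b a) = (\<Sum>s<n. \<Sum>t<n. U $$ (s,r) * X $$ (a*n+t, b*n+s) * cnj (U $$ (t,r)))"
    unfolding QB_def by (simp add: Xc)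
  also have "\<dots> = (\<Sum>t<n. \<Sum>s<n. U $$ (s,r) * X $$ (a*n+t, b*n+s) * cnj (U $$ (t,r)))" by (rule sum.swap)
  also have "\<dots> = QB U n X r a b" unfolding QB_def by (simp add: mult.commute mult.left_commute)
  finally show ?thesis .
qed

lemma QB_quad: assumes X: "X \<in> carrier_mat (k*n) (k*n)"
  shows "(\<Sum>a<k. \<Sum>b<k. cnj (v a) * v b * QB U n X r a b) = (X *\<^sub>v (vec (k*n) (\<lambda>I. v (I div n) * U $$ (I mod n, r)))) \<bullet>c (vec (k*n) (\<lambda>I. v (I div n) * U $$ (I mod n, r)))"
    (is "?L = (X *\<^sub>v ?y) \<bullet>c ?y")
proof (cases "n = 0")
  case True
  thus ?thesis using X by (simp add: QB_def scalar_prod_def)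
next
  case False
  hence n: "n > 0" by simp
  define y where "y I = v (I div n) * U $$ (I mod n, r)" for I
  have "(X *\<^sub>v ?y) \<bullet>c ?y = (\<Sum>I<k*n. (\<Sum>J<k*n. X $$ (I,J) * y J) * cnj (y I))"
    using X by (simp add: scalar_prod_def lessThan_atLeast0 y_def)
  also have "\<dots> = (\<Sum>I<k*n. \<Sum>J<k*n. X $$ (I,J) * y J * cnj (y I))" by (simp add: sum_distrib_right)
  also have "\<dots> = (\<Sum>a<k. \<Sum>s<n. \<Sum>b<k. \<Sum>t<n. X $$ (a*n+s,b*n+t) * y (b*n+t) * cnj (y (a*n+s)))"
    by (simp add: sum_split_div)
  also have "\<dots> = (\<Sum>a<k. \<Sum>s<n. \<Sum>b<k. \<Sum>t<n. cnj (v a) * v b * (cnj (U $$ (s,r)) * X $$ (a*n+s, b*n+t) * U $$ (t,r)))"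
    using n by (intro sum.cong refl, simp add: y_def algebra_simps)
  also have "\<dots> = (\<Sum>a<k. \<Sum>b<k. \<Sum>s<n. \<Sum>t<n. cnj (v a) * v b * (cnj (U $$ (s,r)) * X $$ (a*n+s, b*n+t) * U $$ (t,r)))"
    by (rule swap_inner)
  also have "\<dots> = ?L" unfolding QB_def by (simp add: sum_distrib_left)
  finally show ?thesis by simp
qed

lemma dm2: "m < (2::nat) \<Longrightarrow> (a*2+m) div 2 = a" "m < (2::nat) \<Longrightarrow> (a*2+m) mod 2 = m"
  by auto

lemma lt_k2: "a < k \<Longrightarrow> m < (2::nat) \<Longrightarrow> a*2+m < k*2" by linarith

lemma chan_cp: assumes X: "X \<in> carrier_mat (k*n) (k*n)" and pX: "psd X" and ab: "0 \<le> a" "0 \<le> b"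
  shows "psd (id_tensor k n 2 (chan n U S a b) X)"
proof -
  let ?M = "id_tensor k n 2 (chan n U S a b) X"
  have hX: "mat_adjoint X = X" using pX unfolding psd_def hermitian_def by blast
  have Mc: "?M \<in> carrier_mat (k*2) (k*2)" by (rule carrier_matI; simp only: idt_dim)
  have hM: "mat_adjoint ?M = ?M"
  proof (rule eq_matI)
    fix i j assume ij: "i < dim_row ?M" "j < dim_col ?M"
    hence ij': "i < k*2" "j < k*2" by simp_all
    have dk: "i div 2 < k" "j div 2 < k" using ij' by auto
    show "mat_adjoint ?M $$ (i,j) = ?M $$ (i,j)"
      using ij' unfolding adj_index[OF ij'(1)[folded idt_dim(2)[of k n "chan n U S a b" X]] ij'(2)[folded idt_dim(1)[of k n "chan n U S a b" X]]]
      by (auto simp: idt_index sum_conjugate[symmetric] QB_herm[OF X hX dk(1) dk(2)])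
  qed (simp_all only: adj_dim idt_dim)
  have quad: "Re ((?M *\<^sub>v w) \<bullet>c w) \<ge> 0" if w: "w \<in> carrier_vec (k*2)" for w
  proof -
    define G where "G m r = (\<Sum>a<k. \<Sum>b<k. cnj (w $ (a*2+m)) * w $ (b*2+m) * QB U n X r a b)" for m r
    have "(?M *\<^sub>v w) \<bullet>c w = (\<Sum>i<k*2. (\<Sum>j<k*2. ?M $$ (i,j) * w $ j) * cnj (w $ i))"
      using w by (simp add: scalar_prod_def lessThan_atLeast0)
    also have "\<dots> = (\<Sum>i<k*2. \<Sum>j<k*2. ?M $$ (i,j) * w $ j * cnj (w $ i))" by (simp add: sum_distrib_right)
    also have "\<dots> = (\<Sum>a'<k. \<Sum>m<2. \<Sum>b'<k. \<Sum>m'<2. ?M $$ (a'*2+m, b'*2+m') * w $ (b'*2+m') * cnj (w $ (a'*2+m)))"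
      by (simp add: sum_split_div)
    also have "\<dots> = (\<Sum>a'<k. \<Sum>m<2. \<Sum>b'<k. \<Sum>m'<2. (if m = m' then (\<Sum>r<n. complex_of_real (cf S a b m r) * QB U n X r a' b') * w $ (b'*2+m) * cnj (w $ (a'*2+m)) else 0))"
      by (intro sum.cong refl, auto simp: idt_index lt_k2 dm2)
    also have "\<dots> = (\<Sum>a'<k. \<Sum>m<2. \<Sum>b'<k. (\<Sum>r<n. complex_of_real (cf S a b m r) * QB U n X r a' b') * w $ (b'*2+m) * cnj (w $ (a'*2+m)))"
      by (intro sum.cong refl, simp)
    also have "\<dots> = (\<Sum>a'<k. \<Sum>m<2. \<Sum>b'<k. \<Sum>r<n. complex_of_real (cf S a b m r) * (cnj (w $ (a'*2+m)) * w $ (b'*2+m) * QB U n X r a' b'))"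
      by (intro sum.cong refl, simp add: sum_distrib_left sum_distrib_right mult_ac)
    also have "\<dots> = (\<Sum>m<2. \<Sum>r<n. \<Sum>a'<k. \<Sum>b'<k. complex_of_real (cf S a b m r) * (cnj (w $ (a'*2+m)) * w $ (b'*2+m) * QB U n X r a' b'))"
      by (rule reorder4)
    also have "\<dots> = (\<Sum>m<2. \<Sum>r<n. complex_of_real (cf S a b m r) * G m r)"
      unfolding G_def by (simp add: sum_distrib_left)
    finally have eq: "(?M *\<^sub>v w) \<bullet>c w = (\<Sum>m<2. \<Sum>r<n. complex_of_real (cf S a b m r) * G m r)" .
    have G0: "Re (G m r) \<ge> 0" for m r
    proof -
      have "G m r = (X *\<^sub>v (vec (k*n) (\<lambda>I. w $ ((I div n)*2+m) * U $$ (I mod n, r)))) \<bullet>c (vec (k*n) (\<lambda>I. w $ ((I div n)*2+m) * U $$ (I mod n, r)))"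
        unfolding G_def by (rule QB_quad[OF X])
      moreover have "Re ((X *\<^sub>v (vec (k*n) (\<lambda>I. w $ ((I div n)*2+m) * U $$ (I mod n, r)))) \<bullet>c (vec (k*n) (\<lambda>I. w $ ((I div n)*2+m) * U $$ (I mod n, r)))) \<ge> 0"
        using pX X unfolding psd_def by auto
      ultimately show ?thesis by simp
    qed
    have "Re ((?M *\<^sub>v w) \<bullet>c w) = (\<Sum>m<2. \<Sum>r<n. cf S a b m r * Re (G m r))" unfolding eq by simp
    also have "\<dots> \<ge> 0" using ab G0 by (intro sum_nonneg, auto simp: cf_def)
    finally show ?thesis .
  qed
  show ?thesis unfolding psd_def hermitian_def using Mc hM quad by auto
qed

lemma sum_qf: assumes Z: "Z \<in> carrier_mat n n" and U: "U \<in> carrier_mat n n" and UU: "mat_adjoint U * U = 1\<^sub>m n"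
  shows "(\<Sum>r<n. qf U n r Z) = mtrace Z"
proof -
  have UU': "U * mat_adjoint U = 1\<^sub>m n" using mat_mult_left_right_inverse[OF _ U UU] U by auto
  have "(\<Sum>r<n. qf U n r Z) = (\<Sum>r<n. (mat_adjoint U * Z * U) $$ (r,r))" using qf_mat[OF Z U] by simp
  also have "\<dots> = mtrace (mat_adjoint U * Z * U)" unfolding mtrace_def using U Z by simp
  also have "\<dots> = mtrace (Z * U * mat_adjoint U)"
    using mtrace_comm[of "mat_adjoint U" n n "Z * U"] U Z by (simp add: assoc_mult_mat[of _ n n _ n _ n])
  also have "\<dots> = mtrace Z" using U Z UU' by (simp add: assoc_mult_mat[of _ n n _ n _ n])
  finally show ?thesis .
qed

lemma density_qf: assumes d: "density n \<rho>" and U: "U \<in> carrier_mat n n" and r: "r < n"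
  shows "qf U n r \<rho> = complex_of_real (Re (qf U n r \<rho>))" "Re (qf U n r \<rho>) \<ge> 0"
proof -
  have rho: "\<rho> \<in> carrier_mat n n" and h: "mat_adjoint \<rho> = \<rho>"
    and pos: "\<forall>v \<in> carrier_vec n. Re ((\<rho> *\<^sub>v v) \<bullet>c v) \<ge> 0"
    using d unfolding density_def psd_def hermitian_def by auto
  show "qf U n r \<rho> = complex_of_real (Re (qf U n r \<rho>))" by (rule cnj_real[OF qf_herm[OF rho h]])
  have "col U r \<in> carrier_vec n" using U by auto
  thus "Re (qf U n r \<rho>) \<ge> 0" using pos qf_quad[OF rho U r] by auto
qed

lemma density_qf_sum: assumes d: "density n \<rho>" and U: "U \<in> carrier_mat n n" and UU: "mat_adjoint U * U = 1\<^sub>m n"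
  shows "(\<Sum>r<n. Re (qf U n r \<rho>)) = 1"
proof -
  have rho: "\<rho> \<in> carrier_mat n n" and tr: "mtrace \<rho> = 1" using d unfolding density_def by auto
  have "(\<Sum>r<n. Re (qf U n r \<rho>)) = Re (\<Sum>r<n. qf U n r \<rho>)" by simp
  also have "\<dots> = 1" unfolding sum_qf[OF rho U UU] tr by simp
  finally show ?thesis .
qed

definition pq :: "nat set \<Rightarrow> real \<Rightarrow> real \<Rightarrow> complex mat \<Rightarrow> nat \<Rightarrow> complex mat \<Rightarrow> nat \<Rightarrow> real" where
  "pq S a b U n Z i = (\<Sum>r<n. cf S a b i r * Re (qf U n r Z))"

lemma chan_density: assumes d: "density n \<rho>" and U: "U \<in> carrier_mat n n"
  shows "chan n U S a b \<rho> = mat 2 2 (\<lambda>(i,j). if i = j then complex_of_real (pq S a b U n \<rho> i) else 0)"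
proof -
  have "(\<Sum>r<n. complex_of_real (cf S a b i r) * qf U n r \<rho>) = complex_of_real (pq S a b U n \<rho> i)" for i
  proof -
    have "(\<Sum>r<n. complex_of_real (cf S a b i r) * qf U n r \<rho>) = (\<Sum>r<n. complex_of_real (cf S a b i r * Re (qf U n r \<rho>)))"
      by (rule sum.cong[OF refl], subst density_qf(1)[OF d U], auto)
    thus ?thesis unfolding pq_def by simp
  qed
  note eqs = this
  show ?thesis unfolding chan_def by (rule eq_matI, auto simp: eqs)
qed

lemma pq_bounds: assumes d: "density n \<rho>" and U: "U \<in> carrier_mat n n" and UU: "mat_adjoint U * U = 1\<^sub>m n"
  and ba: "b \<le> a"
  shows "b \<le> pq S a b U n \<rho> i" "pq S a b U n \<rho> i \<le> a"
proof -
  have x0: "r < n \<Longrightarrow> Re (qf U n r \<rho>) \<ge> 0" for r using density_qf(2)[OF d U] by auto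
  have s1: "(\<Sum>r<n. Re (qf U n r \<rho>)) = 1" by (rule density_qf_sum[OF d U UU])
  have "b = (\<Sum>r<n. b * Re (qf U n r \<rho>))" using s1 by (simp add: sum_distrib_left[symmetric])
  also have "\<dots> \<le> pq S a b U n \<rho> i" unfolding pq_def
    by (rule sum_mono, insert x0 ba, auto simp: cf_def intro: mult_right_mono)
  finally show "b \<le> pq S a b U n \<rho> i" .
  have "pq S a b U n \<rho> i \<le> (\<Sum>r<n. a * Re (qf U n r \<rho>))" unfolding pq_def
    by (rule sum_mono, insert x0 ba, auto simp: cf_def intro: mult_right_mono)
  also have "\<dots> = a" using s1 by (simp add: sum_distrib_left[symmetric])
  finally show "pq S a b U n \<rho> i \<le> a" .
qed

lemma pq_sum: assumes d: "density n \<rho>" and U: "U \<in> carrier_mat n n" and UU: "mat_adjoint U * U = 1\<^sub>m n"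
  and ab: "a + b = 1"
  shows "pq S a b U n \<rho> 0 + pq S a b U n \<rho> 1 = 1"
proof -
  have "pq S a b U n \<rho> 0 + pq S a b U n \<rho> 1 = (\<Sum>r<n. (cf S a b 0 r + cf S a b 1 r) * Re (qf U n r \<rho>))"
    unfolding pq_def sum.distrib[symmetric] by (simp add: distrib_right)
  also have "\<dots> = (\<Sum>r<n. Re (qf U n r \<rho>))" by (rule sum.cong, auto simp: cf_def ab add.commute)
  also have "\<dots> = 1" by (rule density_qf_sum[OF d U UU])
  finally show ?thesis .
qed

lemma hockey_diag_ge: assumes X: "X \<in> carrier_mat n n" and dX: "diagonal_mat X" and re: "\<forall>i<n. X $$ (i,i) \<in> \<real>"
  shows "(\<Sum>i<n. max 0 (Re (X $$ (i,i)))) \<le> Re (mtrace (pos_part X))"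
proof -
  have "(\<Sum>i<n. max 0 (Re (X $$ (i,i)))) = (\<Sum>i\<in>{i. i < n \<and> Re (X $$ (i,i)) > 0}. Re (X $$ (i,i)))"
    by (rule sum.mono_neutral_cong_right, auto)
  also have "\<dots> \<le> Re (mtrace (pos_part X))"
    by (rule hockey_lower[OF spec_diag[OF X dX re] X], auto)
  finally show ?thesis .
qed

lemma diag2_hockey0: assumes "\<forall>i<2. x i \<le> 0"
  shows "Re (mtrace (pos_part (mat 2 2 (\<lambda>(i,j). if i = j then complex_of_real (x i) else 0)))) = 0"
proof -
  let ?X = "mat 2 2 (\<lambda>(i,j). if i = j then complex_of_real (x i) else 0)"
  have X: "?X \<in> carrier_mat 2 2" by auto
  have dX: "diagonal_mat ?X" unfolding diagonal_mat_def by auto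
  have re: "\<forall>i<2. ?X $$ (i,i) \<in> \<real>" by auto
  have "Re (mtrace (pos_part ?X)) \<le> 0"
    by (rule hockey_upper0[OF spec_diag[OF X dX re] X dX], insert assms, auto)
  moreover have "0 \<le> Re (mtrace (pos_part ?X))"
    using hockey_lower[OF spec_diag[OF X dX re] X, of "{}"] by auto
  ultimately show ?thesis by simp
qed

lemma chan_LDP: assumes dr: "density n \<rho>" and ds: "density n \<sigma>" and U: "U \<in> carrier_mat n n"
  and UU: "mat_adjoint U * U = 1\<^sub>m n" and ba: "b \<le> a" and b0: "0 \<le> b" and g: "a = \<gamma> * b" and g0: "\<gamma> \<ge> 0"
  shows "hockey \<gamma> (chan n U S a b \<rho>) (chan n U S a b \<sigma>) = 0"
proof -
  let ?x = "\<lambda>i. pq S a b U n \<rho> i - \<gamma> * pq S a b U n \<sigma> i"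
  have eq: "chan n U S a b \<rho> - complex_of_real \<gamma> \<cdot>\<^sub>m chan n U S a b \<sigma> = mat 2 2 (\<lambda>(i,j). if i = j then complex_of_real (?x i) else 0)"
    unfolding chan_density[OF dr U] chan_density[OF ds U] by (rule eq_matI, auto)
  have "?x i \<le> 0" for i
  proof -
    have "pq S a b U n \<rho> i \<le> a" by (rule pq_bounds[OF dr U UU ba])
    also have "a = \<gamma> * b" by (rule g)
    also have "\<dots> \<le> \<gamma> * pq S a b U n \<sigma> i" using pq_bounds(1)[OF ds U UU ba] g0 by (rule mult_left_mono)
    finally show ?thesis by simp
  qed
  thus ?thesis unfolding hockey_def eq by (intro diag2_hockey0, auto)
qed

lemma chan_qc: assumes U: "U \<in> carrier_mat n n" and UU: "mat_adjoint U * U = 1\<^sub>m n"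
  and ab: "a + b = 1" and a0: "0 \<le> a" and b0: "0 \<le> b"
  shows "quantum_channel n 2 (chan n U S a b)"
  unfolding quantum_channel_def
proof (intro conjI ballI allI impI)
  fix X :: "complex mat" assume "X \<in> carrier_mat n n" show "chan n U S a b X \<in> carrier_mat 2 2" by (rule chan_carrier)
next
  fix X Y :: "complex mat" and x y assume "X \<in> carrier_mat n n" "Y \<in> carrier_mat n n"
  thus "chan n U S a b (x \<cdot>\<^sub>m X + y \<cdot>\<^sub>m Y) = x \<cdot>\<^sub>m chan n U S a b X + y \<cdot>\<^sub>m chan n U S a b Y" by (rule chan_lin)
next
  fix X :: "complex mat" assume "X \<in> carrier_mat n n" thus "mtrace (chan n U S a b X) = mtrace X" by (rule chan_trace[OF _ U UU ab])
next
  fix k and X :: "complex mat" assume "X \<in> carrier_mat (k * n) (k * n)" "psd X"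
  thus "psd (id_tensor k n 2 (chan n U S a b) X)" by (rule chan_cp[OF _ _ a0 b0])
qed

definition dg2 :: "(nat \<Rightarrow> real) \<Rightarrow> complex mat" where
  "dg2 \<alpha> = mat 2 2 (\<lambda>(i,j). if i = j then complex_of_real (\<alpha> i) else 0)"

fun pr :: "(nat \<Rightarrow> real) \<Rightarrow> nat \<Rightarrow> nat \<Rightarrow> real" where
  "pr \<alpha> 0 i = 1"
| "pr \<alpha> (Suc n) i = pr \<alpha> n (i div 2) * \<alpha> (i mod 2)"

lemma divmod2_eq: "(i div 2 = j div 2 \<and> i mod 2 = j mod 2) \<longleftrightarrow> i = (j::nat)"
  by (metis div_mult_mod_eq)

lemma tpow_dg2: "tpow (dg2 \<alpha>) n = mat (2^n) (2^n) (\<lambda>(i,j). if i = j then complex_of_real (pr \<alpha> n i) else 0)"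
proof (induct n)
  case 0
  show ?case by (rule eq_matI, auto)
next
  case (Suc n)
  let ?T = "tpow (dg2 \<alpha>) n"
  have dT: "dim_row ?T = 2^n" "dim_col ?T = 2^n" unfolding Suc by auto
  have d2: "dim_row (dg2 \<alpha>) = 2" "dim_col (dg2 \<alpha>) = 2" unfolding dg2_def by auto
  show ?case
  proof (rule eq_matI)
    fix i j assume ij: "i < dim_row (mat (2 ^ Suc n) (2 ^ Suc n) (\<lambda>(i,j). if i = j then complex_of_real (pr \<alpha> (Suc n) i) else 0))"
      "j < dim_col (mat (2 ^ Suc n) (2 ^ Suc n) (\<lambda>(i,j). if i = j then complex_of_real (pr \<alpha> (Suc n) i) else 0))"
    hence ij': "i < 2^n * 2" "j < 2^n * 2" by (auto simp: mult.commute)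
    have dv: "i div 2 < 2^n" "j div 2 < 2^n" using ij' by auto
    have "tpow (dg2 \<alpha>) (Suc n) $$ (i,j) = ?T $$ (i div 2, j div 2) * dg2 \<alpha> $$ (i mod 2, j mod 2)"
      using ij' by (simp add: kron_def dT d2)
    also have "\<dots> = (if i = j then complex_of_real (pr \<alpha> (Suc n) i) else 0)"
      unfolding Suc using dv divmod2_eq[of i j] by (auto simp: dg2_def)
    finally show "tpow (dg2 \<alpha>) (Suc n) $$ (i,j) = mat (2 ^ Suc n) (2 ^ Suc n) (\<lambda>(i,j). if i = j then complex_of_real (pr \<alpha> (Suc n) i) else 0) $$ (i,j)"
      using ij by simp
  qed (auto simp: kron_def dT d2 mult.commute)
qed

lemma pr_nonneg: "(\<And>i. \<alpha> i \<ge> 0) \<Longrightarrow> pr \<alpha> n i \<ge> 0"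
  by (induct n arbitrary: i, auto)

lemma sm2[simp]: "Suc (a * 2) mod 2 = Suc 0" "Suc (a * 2) div 2 = (a::nat)" by presburger+

lemma sum_pow2: fixes f :: "nat \<Rightarrow> 'a::comm_monoid_add" shows "(\<Sum>i<2^Suc n. f i) = (\<Sum>a<2^n. \<Sum>m<2. f (a*2+m))"
  using sum_split_div[where k="2^n" and d=2 and f=f] by (simp add: mult.commute)

lemma sum2: "(\<Sum>m<(2::nat). g m) = g 0 + g 1"
  by (simp add: numeral_2_eq_2)

lemma pr_sum: "(\<Sum>i<2^n. pr \<alpha> n i) = (\<alpha> 0 + \<alpha> 1)^n"
proof (induct n)
  case (Suc n)
  have "(\<Sum>i<2^Suc n. pr \<alpha> (Suc n) i) = (\<Sum>a<2^n. pr \<alpha> n a * (\<alpha> 0 + \<alpha> 1))"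
    unfolding sum_pow2 sum2 by (simp add: distrib_left sum.distrib)
  also have "\<dots> = (\<alpha> 0 + \<alpha> 1)^Suc n" unfolding sum_distrib_right[symmetric] Suc by simp
  finally show ?case .
qed simp

lemma pr_bc: assumes "\<And>i. \<alpha> i \<ge> 0" "\<And>i. \<beta> i \<ge> 0"
  shows "(\<Sum>i<2^n. sqrt (pr \<alpha> n i * pr \<beta> n i)) = (sqrt (\<alpha> 0 * \<beta> 0) + sqrt (\<alpha> 1 * \<beta> 1))^n"
proof (induct n)
  case (Suc n)
  have "(\<Sum>i<2^Suc n. sqrt (pr \<alpha> (Suc n) i * pr \<beta> (Suc n) i))
      = (\<Sum>a<2^n. sqrt (pr \<alpha> n a * pr \<beta> n a) * (sqrt (\<alpha> 0 * \<beta> 0) + sqrt (\<alpha> 1 * \<beta> 1)))"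
    unfolding sum_pow2 sum2 by (simp add: distrib_left real_sqrt_mult mult_ac sum.distrib)
  also have "\<dots> = (sqrt (\<alpha> 0 * \<beta> 0) + sqrt (\<alpha> 1 * \<beta> 1))^Suc n" unfolding sum_distrib_right[symmetric] Suc by simp
  finally show ?case .
qed simp

lemma min_le_sqrt: "0 \<le> u \<Longrightarrow> 0 \<le> v \<Longrightarrow> min u v \<le> sqrt (u * (v::real))"
proof -
  assume uv: "0 \<le> u" "0 \<le> v"
  show ?thesis
  proof (cases "u \<le> v")
    case True
    have "min u v = sqrt (u * u)" using True uv by simp
    also have "\<dots> \<le> sqrt (u * v)" using True uv by (intro real_sqrt_le_mono mult_left_mono)
    finally show ?thesis .
  next
    case False
    have "min u v = sqrt (v * v)" using False uv by simp
    also have "\<dots> \<le> sqrt (u * v)" using False uv by (intro real_sqrt_le_mono mult_right_mono, auto)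
    finally show ?thesis .
  qed
qed

lemma perr_bound: assumes a0: "\<And>i. \<alpha> i \<ge> 0" and b0: "\<And>i. \<beta> i \<ge> 0" and a1: "\<alpha> 0 + \<alpha> 1 = 1"
  and p: "0 < p" "p < 1"
  shows "p_err (tpow (dg2 \<alpha>) N) (tpow (dg2 \<beta>) N) p \<le> sqrt (p * (1 - p)) * (sqrt (\<alpha> 0 * \<beta> 0) + sqrt (\<alpha> 1 * \<beta> 1))^N"
proof -
  define \<gamma> where "\<gamma> = (1 - p) / p"
  define K where "K = (2::nat)^N"
  let ?x = "\<lambda>i. pr \<alpha> N i - \<gamma> * pr \<beta> N i"
  let ?X = "mat K K (\<lambda>(i,j). if i = j then complex_of_real (?x i) else 0)"
  have eq: "tpow (dg2 \<alpha>) N - complex_of_real \<gamma> \<cdot>\<^sub>m tpow (dg2 \<beta>) N = ?X"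
    unfolding tpow_dg2 K_def by (rule eq_matI, auto)
  have X: "?X \<in> carrier_mat K K" by auto
  have dX: "diagonal_mat ?X" unfolding diagonal_mat_def by auto
  have re: "\<forall>i<K. ?X $$ (i,i) \<in> \<real>" by auto
  have h: "(\<Sum>i<K. max 0 (?x i)) \<le> hockey \<gamma> (tpow (dg2 \<alpha>) N) (tpow (dg2 \<beta>) N)"
    unfolding hockey_def eq using hockey_diag_ge[OF X dX re] by simp
  have s1: "(\<Sum>i<K. pr \<alpha> N i) = 1" unfolding K_def pr_sum a1 by simp
  have "p_err (tpow (dg2 \<alpha>) N) (tpow (dg2 \<beta>) N) p \<le> p - p * (\<Sum>i<K. max 0 (?x i))"
    unfolding p_err_def \<gamma>_def[symmetric] using h p by (simp add: mult_left_mono)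
  also have "\<dots> = (\<Sum>i<K. p * pr \<alpha> N i - p * max 0 (?x i))"
    by (simp add: sum_subtractf sum_distrib_left[symmetric] s1)
  also have "\<dots> \<le> (\<Sum>i<K. sqrt (p * (1 - p)) * sqrt (pr \<alpha> N i * pr \<beta> N i))"
  proof (rule sum_mono)
    fix i
    have pa: "pr \<alpha> N i \<ge> 0" "pr \<beta> N i \<ge> 0" using pr_nonneg a0 b0 by auto
    have pg: "p * \<gamma> = 1 - p" unfolding \<gamma>_def using p by simp
    have "p * pr \<alpha> N i - p * max 0 (?x i) = min (p * pr \<alpha> N i) ((1 - p) * pr \<beta> N i)"
      using p by (auto simp: max_def min_def right_diff_distrib pg[symmetric] mult.assoc[symmetric] mult_le_cancel_left)
    also have "\<dots> \<le> sqrt ((p * pr \<alpha> N i) * ((1 - p) * pr \<beta> N i))"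
      by (rule min_le_sqrt, insert pa p, auto)
    also have "\<dots> = sqrt (p * (1 - p)) * sqrt (pr \<alpha> N i * pr \<beta> N i)"
      by (simp add: real_sqrt_mult[symmetric] mult_ac)
    finally show "p * pr \<alpha> N i - p * max 0 (?x i) \<le> sqrt (p * (1 - p)) * sqrt (pr \<alpha> N i * pr \<beta> N i)" .
  qed
  also have "\<dots> = sqrt (p * (1 - p)) * (sqrt (\<alpha> 0 * \<beta> 0) + sqrt (\<alpha> 1 * \<beta> 1))^N"
    unfolding sum_distrib_left[symmetric] K_def pr_bc[OF a0 b0] ..
  finally show ?thesis .
qed

lemma bc_sq: assumes q: "0 \<le> q1" "q1 \<le> 1" "0 \<le> q2" "q2 \<le> 1"
  shows "(sqrt (q1*q2) + sqrt ((1-q1)*(1-q2)))^2 \<le> 1 - (q1 - q2)^2"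
proof -
  define u where "u = q1 * (1 - q1)"
  define v where "v = q2 * (1 - q2)"
  have u: "u \<ge> 0" and v: "v \<ge> 0" using q unfolding u_def v_def by auto
  have x2: "(sqrt (q1*q2))^2 = q1*q2" using q by simp
  have y2: "(sqrt ((1-q1)*(1-q2)))^2 = (1-q1)*(1-q2)" using q by simp
  have "sqrt (q1*q2) * sqrt ((1-q1)*(1-q2)) = sqrt (q1*q2*((1-q1)*(1-q2)))" by (simp add: real_sqrt_mult)
  also have "q1*q2*((1-q1)*(1-q2)) = u * v" by (simp add: u_def v_def algebra_simps)
  finally have xy: "sqrt (q1*q2) * sqrt ((1-q1)*(1-q2)) = sqrt (u * v)" .
  have am: "sqrt (u * v) \<le> (u + v) / 2" by (rule arith_geo_mean_sqrt[OF u v])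
  have "(sqrt (q1*q2) + sqrt ((1-q1)*(1-q2)))^2 = q1*q2 + (1-q1)*(1-q2) + 2 * sqrt (u * v)"
    unfolding power2_sum x2 y2 mult.assoc xy by simp
  also have "\<dots> \<le> q1*q2 + (1-q1)*(1-q2) + (u + v)" using am by simp
  also have "\<dots> = 1 - (q1 - q2)^2" unfolding u_def v_def by (simp add: algebra_simps power2_eq_square)
  finally show ?thesis .
qed

lemma bc_bound: assumes q: "0 \<le> q1" "q1 \<le> 1" "0 \<le> q2" "q2 \<le> 1"
  shows "sqrt (q1*q2) + sqrt ((1-q1)*(1-q2)) \<le> exp (-((q1 - q2)^2 / 2))"
proof -
  let ?B = "sqrt (q1*q2) + sqrt ((1-q1)*(1-q2))"
  have "?B^2 \<le> 1 - (q1 - q2)^2" by (rule bc_sq[OF q])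
  also have "\<dots> \<le> exp (-((q1 - q2)^2))" using exp_ge_add_one_self[of "-((q1 - q2)^2)"] by simp
  also have "\<dots> = (exp (-((q1 - q2)^2 / 2)))^2" by (simp add: exp_double[symmetric])
  finally have "?B^2 \<le> (exp (-((q1 - q2)^2 / 2)))^2" .
  thus ?thesis by (rule power2_le_imp_le, simp)
qed

lemma final_num: assumes t: "0 < t" "t \<le> 1" and d: "0 < \<delta>" "\<delta> < 1" and p: "0 < p" "p < 1"
  and B: "0 \<le> B" "B \<le> exp (- t / 2)"
  shows "sqrt (p * (1 - p)) * B ^ (nat \<lfloor>2 * ln (1 / \<delta>) / t\<rfloor>) \<le> \<delta>"
proof -
  define L where "L = ln (1 / \<delta>)"
  define N where "N = nat \<lfloor>2 * L / t\<rfloor>"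
  have L0: "L > 0" unfolding L_def using d by simp
  have x0: "2 * L / t \<ge> 0" using L0 t by simp
  have NN: "real N > 2 * L / t - 1" unfolding N_def using x0 by linarith
  have sp: "sqrt (p * (1 - p)) \<le> 1 / 2"
  proof -
    have e: "p * (1 - p) = (1/2)^2 - (p - 1/2)^2" by (simp add: power2_eq_square algebra_simps)
    have "p * (1 - p) \<le> (1/2)^2" unfolding e using zero_le_power2[of "p - 1/2"] by linarith
    hence "sqrt (p * (1 - p)) \<le> sqrt ((1/2)^2)" by (rule real_sqrt_le_mono)
    thus ?thesis by simp
  qed
  have "B ^ N \<le> (exp (- t / 2)) ^ N" by (rule power_mono[OF B(2) B(1)])
  also have "\<dots> = exp (real N * (- t / 2))" by (rule exp_of_nat_mult[symmetric])
  also have "\<dots> \<le> exp (1/2 - L)"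
  proof -
    have "real N * t > 2 * L - t" using NN t by (simp add: field_simps)
    hence "real N * (- t / 2) \<le> 1/2 - L" using t by (simp add: field_simps)
    thus ?thesis by simp
  qed
  also have "\<dots> = exp (1/2) * \<delta>" unfolding L_def using d by (simp add: exp_diff)
  finally have BN: "B ^ N \<le> exp (1/2) * \<delta>" .
  have e2: "exp (1/2::real) \<le> 2"
  proof -
    have "(exp (1/2::real))^2 = exp 1" by (simp add: exp_double[symmetric])
    also have "\<dots> \<le> 2^2" using exp_le by simp
    finally show ?thesis by (rule power2_le_imp_le, simp)
  qed
  have "sqrt (p * (1 - p)) * B ^ N \<le> (1/2) * (exp (1/2) * \<delta>)"
    using sp BN B(1) by (intro mult_mono, auto)
  also have "\<dots> \<le> \<delta>" using e2 d by simp
  finally show ?thesis unfolding N_def L_def .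
qed

lemma key:
  fixes dA :: nat and \<epsilon> p \<delta> :: real and \<rho> \<sigma> :: "complex mat"
  assumes \<epsilon>: "\<epsilon> > 0" and p: "0 < p" "p < 1" and d: "0 < \<delta>" "\<delta> < 1"
    and dr: "density dA \<rho>" and ds: "density dA \<sigma>" and E0: "hockey 1 \<rho> \<sigma> \<noteq> 0"
  shows "ereal_of_enat (nB_LDP dA \<epsilon> \<rho> \<sigma> p \<delta>)
     \<le> ereal (((exp \<epsilon> + 1) / (exp \<epsilon> - 1))\<^sup>2 * (2 * ln (1 / \<delta>) / (hockey 1 \<rho> \<sigma>)\<^sup>2))"
proof -
  have rho: "\<rho> \<in> carrier_mat dA dA" and hr: "mat_adjoint \<rho> = \<rho>"
    using dr unfolding density_def psd_def hermitian_def by auto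
  have sig: "\<sigma> \<in> carrier_mat dA dA" and hs: "mat_adjoint \<sigma> = \<sigma>"
    using ds unfolding density_def psd_def hermitian_def by auto
  define X where "X = \<rho> - complex_of_real 1 \<cdot>\<^sub>m \<sigma>"
  have Xeq: "X = \<rho> - \<sigma>" unfolding X_def by (rule eq_matI, insert rho sig, auto)
  have Xc: "X \<in> carrier_mat dA dA" unfolding Xeq using rho sig by auto
  have hX: "mat_adjoint X = X"
  proof (rule eq_matI)
    fix i j assume ij: "i < dim_row X" "j < dim_col X"
    hence ij': "i < dA" "j < dA" using Xc by auto
    have "\<rho> $$ (i,j) = cnj (\<rho> $$ (j,i))" using arg_cong[OF hr, of "\<lambda>M. M $$ (i,j)"] rho ij' by auto
    moreover have "\<sigma> $$ (i,j) = cnj (\<sigma> $$ (j,i))" using arg_cong[OF hs, of "\<lambda>M. M $$ (i,j)"] sig ij' by auto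
    ultimately show "mat_adjoint X $$ (i,j) = X $$ (i,j)" unfolding Xeq using rho sig ij' by auto
  qed (insert Xc, auto)
  have dX: "dim_row X = dA" using Xc by auto
  from hermitian_spectral[OF Xc hX] have ex: "\<exists>U D. spec_dec X U D" unfolding spec_dec_def dX by blast
  from hockey_dec[OF ex Xc] obtain U D where sd: "spec_dec X U D"
    and hv: "Re (mtrace (pos_part X)) = (\<Sum>r<dA. max 0 (Re (D $$ (r,r))))" by blast
  define E1 where "E1 = hockey 1 \<rho> \<sigma>"
  have E1v: "E1 = (\<Sum>r<dA. max 0 (Re (D $$ (r,r))))" unfolding E1_def hockey_def X_def[symmetric] hv ..
  have U: "U \<in> carrier_mat dA dA" and UU: "mat_adjoint U * U = 1\<^sub>m dA" and D: "D \<in> carrier_mat dA dA"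
    and XU: "X = U * D * mat_adjoint U"
    using sd dX unfolding spec_dec_def unitary_mat_def by auto
  have DX: "mat_adjoint U * X * U = D"
  proof -
    have "mat_adjoint U * X * U = (mat_adjoint U * U) * D * (mat_adjoint U * U)"
      unfolding XU using U D by (simp add: assoc_mult_mat[of _ dA dA _ dA _ dA] mult_carrier_mat[of _ dA dA])
    also have "\<dots> = D" unfolding UU using D by simp
    finally show ?thesis .
  qed
  have qD: "r < dA \<Longrightarrow> Re (qf U dA r \<rho>) - Re (qf U dA r \<sigma>) = Re (D $$ (r,r))" for r
  proof -
    assume r: "r < dA"
    have "qf U dA r \<rho> - qf U dA r \<sigma> = qf U dA r X" unfolding Xeq by (rule qf_minus[OF rho sig, symmetric])
    also have "\<dots> = D $$ (r,r)" using qf_mat[OF Xc U r] DX by simp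
    finally show ?thesis by (metis minus_complex.sel(1))
  qed
  define S where "S = {r. r < dA \<and> Re (D $$ (r,r)) > 0}"
  define e where "e = exp \<epsilon>"
  have e1: "e > 1" unfolding e_def using \<epsilon> by simp
  define a where "a = e / (1 + e)"
  define b where "b = 1 / (1 + e)"
  have ab: "a + b = 1" unfolding a_def b_def using e1 by (simp add: field_simps)
  have b0: "0 \<le> b" and a0: "0 \<le> a" unfolding a_def b_def using e1 by auto
  have ba: "b \<le> a" unfolding a_def b_def using e1 by (simp add: divide_right_mono)
  have aeb: "a = exp \<epsilon> * b" unfolding a_def b_def e_def by simp
  have amb: "a - b = (e - 1) / (e + 1)" unfolding a_def b_def by (simp add: diff_divide_distrib[symmetric] add.commute)
  define \<Phi> where "\<Phi> = chan dA U S a b"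
  have LDP: "LDP dA \<epsilon> 2 \<Phi>"
    unfolding LDP_def \<Phi>_def
    using chan_qc[OF U UU ab a0 b0] chan_LDP[OF _ _ U UU ba b0 aeb] by auto
  define \<alpha> where "\<alpha> = pq S a b U dA \<rho>"
  define \<beta> where "\<beta> = pq S a b U dA \<sigma>"
  have Pr: "\<Phi> \<rho> = dg2 \<alpha>" unfolding \<Phi>_def chan_density[OF dr U] dg2_def \<alpha>_def ..
  have Ps: "\<Phi> \<sigma> = dg2 \<beta>" unfolding \<Phi>_def chan_density[OF ds U] dg2_def \<beta>_def ..
  have a0': "\<And>i. \<alpha> i \<ge> 0" using pq_bounds(1)[OF dr U UU ba] b0 unfolding \<alpha>_def by (meson order_trans)
  have b0': "\<And>i. \<beta> i \<ge> 0" using pq_bounds(1)[OF ds U UU ba] b0 unfolding \<beta>_def by (meson order_trans)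
  have a1: "\<alpha> 0 + \<alpha> 1 = 1" unfolding \<alpha>_def by (rule pq_sum[OF dr U UU ab])
  have b1: "\<beta> 0 + \<beta> 1 = 1" unfolding \<beta>_def by (rule pq_sum[OF ds U UU ab])
  have diff: "\<alpha> 0 - \<beta> 0 = (a - b) * E1"
  proof -
    have "\<alpha> 0 - \<beta> 0 = (\<Sum>r<dA. cf S a b 0 r * Re (D $$ (r,r)))"
      unfolding \<alpha>_def \<beta>_def pq_def sum_subtractf[symmetric]
      by (rule sum.cong[OF refl], simp add: qD[symmetric] right_diff_distrib)
    also have "\<dots> = (\<Sum>r<dA. b * Re (D $$ (r,r)) + (a - b) * max 0 (Re (D $$ (r,r))))"
      by (rule sum.cong[OF refl], auto simp: cf_def S_def algebra_simps max_def)
    also have "\<dots> = b * (\<Sum>r<dA. Re (qf U dA r \<rho>) - Re (qf U dA r \<sigma>)) + (a - b) * E1"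
      unfolding sum.distrib E1v sum_distrib_left[symmetric] by (simp add: qD)
    also have "(\<Sum>r<dA. Re (qf U dA r \<rho>) - Re (qf U dA r \<sigma>)) = 0"
      unfolding sum_subtractf density_qf_sum[OF dr U UU] density_qf_sum[OF ds U UU] by simp
    finally show ?thesis by simp
  qed
  define t where "t = (\<alpha> 0 - \<beta> 0)^2"
  have t0: "t > 0" unfolding t_def diff using e1 E0 unfolding amb E1_def by simp
  have t1: "t \<le> 1"
  proof -
    have "\<alpha> 0 \<le> 1" "\<beta> 0 \<le> 1" using a1 b1 a0'[of 1] b0'[of 1] by linarith+
    hence "\<bar>\<alpha> 0 - \<beta> 0\<bar> \<le> 1" using a0'[of 0] b0'[of 0] by linarith
    thus ?thesis unfolding t_def by (simp add: abs_square_le_1)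
  qed
  define N where "N = nat \<lfloor>2 * ln (1 / \<delta>) / t\<rfloor>"
  have q: "0 \<le> \<alpha> 0" "\<alpha> 0 \<le> 1" "0 \<le> \<beta> 0" "\<beta> 0 \<le> 1" using a1 b1 a0'[of 1] b0'[of 1] a0'[of 0] b0'[of 0] by linarith+
  have BC: "sqrt (\<alpha> 0 * \<beta> 0) + sqrt (\<alpha> 1 * \<beta> 1) \<le> exp (- t / 2)"
  proof -
    have "\<alpha> 1 = 1 - \<alpha> 0" "\<beta> 1 = 1 - \<beta> 0" using a1 b1 by linarith+
    thus ?thesis using bc_bound[OF q] unfolding t_def by simp
  qed
  have "p_err (tpow (\<Phi> \<rho>) N) (tpow (\<Phi> \<sigma>) N) p \<le> \<delta>"
  proof -
    have "p_err (tpow (\<Phi> \<rho>) N) (tpow (\<Phi> \<sigma>) N) p \<le> sqrt (p * (1 - p)) * (sqrt (\<alpha> 0 * \<beta> 0) + sqrt (\<alpha> 1 * \<beta> 1))^N"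
      unfolding Pr Ps by (rule perr_bound[OF a0' b0' a1 p])
    also have "\<dots> \<le> \<delta>" unfolding N_def
      by (rule final_num[OF t0 t1 d p _ BC], insert a0' b0', auto)
    finally show ?thesis .
  qed
  hence nb: "nB (\<Phi> \<rho>) (\<Phi> \<sigma>) p \<delta> \<le> enat N" unfolding nB_def by (auto intro: INF_lower)
  have "nB_LDP dA \<epsilon> \<rho> \<sigma> p \<delta> \<le> nB (\<Phi> \<rho>) (\<Phi> \<sigma>) p \<delta>"
    unfolding nB_LDP_def using LDP by (auto intro!: INF_lower2[of "(2, \<Phi>)"])
  hence "nB_LDP dA \<epsilon> \<rho> \<sigma> p \<delta> \<le> enat N" using nb by (rule order_trans)
  hence "ereal_of_enat (nB_LDP dA \<epsilon> \<rho> \<sigma> p \<delta>) \<le> ereal (real N)"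
    by (metis ereal_of_enat_le_iff ereal_of_enat_simps(1))
  also have "real N \<le> 2 * ln (1 / \<delta>) / t" unfolding N_def using d t0 by simp
  also have "2 * ln (1 / \<delta>) / t = ((exp \<epsilon> + 1) / (exp \<epsilon> - 1))\<^sup>2 * (2 * ln (1 / \<delta>) / (hockey 1 \<rho> \<sigma>)\<^sup>2)"
    unfolding t_def diff amb e_def[symmetric] E1_def[symmetric] using e1 E0[folded E1_def]
    by (simp add: field_simps power2_eq_square)
  finally show ?thesis by simp
qed

theorem mainTheorem6:
  fixes dA :: nat and \<epsilon> p \<delta> :: real and \<rho> \<sigma> :: "complex mat"
  assumes "\<epsilon> > 0" and "0 < p" and "p < 1" and "0 < \<delta>" and "\<delta> < 1"
    and "density dA \<rho>" and "density dA \<sigma>"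
  shows "ereal_of_enat (nB_LDP dA \<epsilon> \<rho> \<sigma> p \<delta>)
           \<le> ereal (((exp \<epsilon> + 1) / (exp \<epsilon> - 1))\<^sup>2)
              * ediv (2 * ln (1 / \<delta>)) ((hockey 1 \<rho> \<sigma>)\<^sup>2)
       \<and> ereal_of_enat (nB_LDP dA \<epsilon> \<rho> \<sigma> p (p / 4))
           \<le> ereal (((exp \<epsilon> + 1) / (exp \<epsilon> - 1))\<^sup>2)
              * ediv (2 * ln (1 / p) + 2 * ln 4) ((hockey 1 \<rho> \<sigma>)\<^sup>2)"
proof -
  have C0: "((exp \<epsilon> + 1) / (exp \<epsilon> - 1))\<^sup>2 > 0" proof -
    have "exp \<epsilon> + 1 > 0" by (simp add: add_pos_pos)
    moreover have "exp \<epsilon> - 1 > 0" using assms(1) by simp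
    ultimately show ?thesis by (intro zero_less_power divide_pos_pos)
  qed
  show ?thesis
  proof (cases "hockey 1 \<rho> \<sigma> = 0")
    case True
    have ep: "exp \<epsilon> + 1 \<noteq> 0" "exp \<epsilon> - 1 \<noteq> 0" using assms(1) by (smt (verit) exp_gt_zero, simp)
    have "ereal (((exp \<epsilon> + 1) / (exp \<epsilon> - 1))\<^sup>2) * \<infinity> = \<infinity>" using C0 ep by simp
    thus ?thesis unfolding ediv_def True by simp
  next
    case False
    have k1: "ereal_of_enat (nB_LDP dA \<epsilon> \<rho> \<sigma> p \<delta>)
     \<le> ereal (((exp \<epsilon> + 1) / (exp \<epsilon> - 1))\<^sup>2 * (2 * ln (1 / \<delta>) / (hockey 1 \<rho> \<sigma>)\<^sup>2))"
      by (rule key[OF assms False])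
    have p4: "0 < p / 4" "p / 4 < 1" using assms by auto
    have k2: "ereal_of_enat (nB_LDP dA \<epsilon> \<rho> \<sigma> p (p / 4))
     \<le> ereal (((exp \<epsilon> + 1) / (exp \<epsilon> - 1))\<^sup>2 * (2 * ln (1 / (p / 4)) / (hockey 1 \<rho> \<sigma>)\<^sup>2))"
      by (rule key[OF assms(1-3) p4 assms(6-7) False])
    have l: "2 * ln (1 / (p / 4)) = 2 * ln (1 / p) + 2 * ln 4"
    proof -
      have "ln ((1 / p) * 4) = ln (1 / p) + ln 4" using assms(2) by (intro ln_mult_pos, auto)
      moreover have "1 / (p / 4) = (1 / p) * 4" by simp
      ultimately have "ln (1 / (p / 4)) = ln (1 / p) + ln 4" by metis
      thus ?thesis by simp
    qed
    show ?thesis unfolding ediv_def using False k1 k2 l by simp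
  qed
qed


end
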